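(* Let $\mu$ be a non-zero $\sigma$-finite (countably additive, non-negative, complete) measure on a $\sigma$-algebra $\Sigma$ of subsets of a set $\Omega$, and let $X$ be a weakly uniformly rotund (real or complex) Banach space. Then the Lebesgue--Bochner space $L_1(\mu,X)$ has property CWO-S, i.e. for every finite convex combination $C=\sum_{k=1}^m \lambda_k U_k$ (with $\lambda_k>0$, $\sum_k\lambda_k=1$) of relatively weakly open subsets $U_1,\dots,U_m$ of the closed unit ball $B_{L_1(\mu,X)}$, every element $x\in C$ with $\|x\|=1$ is an interior point of $C$ in the relative weak topology of $B_{L_1(\mu,X)}$.
   Context: A Banach space $X$ is weakly uniformly rotund (wUR) if for every $x^\ast\in X^\ast$ and every $\varepsilon>0$ there is $\delta>0$ such that whenever $x,y\in X$ with $\|x\|=\|y\|=1$ and $\|\tfrac12(x+y)\|>1-\delta$, one has $|x^\ast(x-y)|<\varepsilon$. For a Banach space $Z$, $B_Z$ denotes its closed unit ball and $S_Z$ its unit sphere. $Z$ has property CWO-S if for every convex combination $C$ of finitely many relatively weakly open subsets of $B_Z$, every $x\in C\cap S_Z$ is an interior point of $C$ in the relative weak topology of $B_Z$. *)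

theory Defs
  imports "HOL-Analysis.Analysis"
begin

definition wUR :: "'b::banach itself \<Rightarrow> bool" where
  "wUR _ \<longleftrightarrow>
     (\<forall>xs::'b \<Rightarrow> real. bounded_linear xs \<longrightarrow>
        (\<forall>\<epsilon>>0. \<exists>\<delta>>0. \<forall>x y::'b. norm x = 1 \<and> norm y = 1 \<and> norm ((1/2) *\<^sub>R (x + y)) > 1 - \<delta>
             \<longrightarrow> \<bar>xs (x - y)\<bar> < \<epsilon>))"

definition strongly_measurable :: "'a measure \<Rightarrow> ('a \<Rightarrow> 'b::real_normed_vector) \<Rightarrow> bool" where
  "strongly_measurable M f \<longleftrightarrow>
     (\<exists>s::nat \<Rightarrow> 'a \<Rightarrow> 'b. (\<forall>n. simple_function M (s n)) \<and>
        (AE x in M. (\<lambda>n. s n x) \<longlonglongrightarrow> f x))"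

text \<open>The Lebesgue--Bochner space L1(M,X), represented by functions (elements equal
  a.e. are not identified; the seminorm below does not distinguish them).\<close>
definition L1 :: "'a measure \<Rightarrow> ('a \<Rightarrow> 'b::real_normed_vector) set" where
  "L1 M = {f. strongly_measurable M f \<and> (\<integral>\<^sup>+x. ennreal (norm (f x)) \<partial>M) < \<infinity>}"

definition L1norm :: "'a measure \<Rightarrow> ('a \<Rightarrow> 'b::real_normed_vector) \<Rightarrow> real" where
  "L1norm M f = enn2real (\<integral>\<^sup>+x. ennreal (norm (f x)) \<partial>M)"

definition L1_ball :: "'a measure \<Rightarrow> ('a \<Rightarrow> 'b::real_normed_vector) set" where
  "L1_ball M = {f \<in> L1 M. L1norm M f \<le> 1}"

definition L1_dual :: "'a measure \<Rightarrow> (('a \<Rightarrow> 'b::real_normed_vector) \<Rightarrow> real) set" where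
  "L1_dual M = {\<phi>.
     (\<forall>f\<in>L1 M. \<forall>g\<in>L1 M. \<phi> (\<lambda>x. f x + g x) = \<phi> f + \<phi> g) \<and>
     (\<forall>c. \<forall>f\<in>L1 M. \<phi> (\<lambda>x. c *\<^sub>R f x) = c * \<phi> f) \<and>
     (\<exists>K. \<forall>f\<in>L1 M. \<bar>\<phi> f\<bar> \<le> K * L1norm M f)}"

definition rel_weakly_open :: "'a measure \<Rightarrow> ('a \<Rightarrow> 'b::real_normed_vector) set \<Rightarrow> bool" where
  "rel_weakly_open M U \<longleftrightarrow> U \<subseteq> L1_ball M \<and>
     (\<forall>f\<in>U. \<exists>F \<epsilon>. finite F \<and> F \<subseteq> L1_dual M \<and> \<epsilon> > 0 \<and>
        {g \<in> L1_ball M. \<forall>\<phi>\<in>F. \<bar>\<phi> g - \<phi> f\<bar> < \<epsilon>} \<subseteq> U)"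

definition L1_CWO_S :: "'a measure \<Rightarrow> 'b::real_normed_vector itself \<Rightarrow> bool" where
  "L1_CWO_S M _ \<longleftrightarrow>
     (\<forall>(m::nat) (lam::nat \<Rightarrow> real) (U::nat \<Rightarrow> ('a \<Rightarrow> 'b) set).
        m \<ge> 1 \<and> (\<forall>k<m. lam k > 0) \<and> (\<Sum>k<m. lam k) = 1 \<and>
        (\<forall>k<m. rel_weakly_open M (U k)) \<longrightarrow>
        (let C = {(\<lambda>x. \<Sum>k<m. lam k *\<^sub>R u k x) | u. \<forall>k<m. u k \<in> U k} in
          \<forall>x\<in>C. L1norm M x = 1 \<longrightarrow>
            (\<exists>V. rel_weakly_open M V \<and> x \<in> V \<and> V \<subseteq> C)))"

end

theory Submission
  imports Defs
begin

definition hbg :: "'b::real_normed_vector \<Rightarrow> ('b \<times> real) set \<Rightarrow> bool" where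
  "hbg z G \<longleftrightarrow> (0,0) \<in> G \<and>
     (\<forall>x r y s. (x,r) \<in> G \<longrightarrow> (y,s) \<in> G \<longrightarrow> (x+y, r+s) \<in> G) \<and>
     (\<forall>c x r. (x,r) \<in> G \<longrightarrow> (c *\<^sub>R x, c*r) \<in> G) \<and>
     (\<forall>x r r'. (x,r) \<in> G \<longrightarrow> (x,r') \<in> G \<longrightarrow> r = r') \<and>
     (\<forall>x r. (x,r) \<in> G \<longrightarrow> r \<le> norm x) \<and> (z, norm z) \<in> G"

lemma hbg_init: "hbg z {(c *\<^sub>R z, c * norm z) | c. True}"
  unfolding hbg_def
proof (intro conjI allI impI)
  show "(0, 0) \<in> {(c *\<^sub>R z, c * norm z) |c. True}" by (rule CollectI, rule exI[of _ 0]) simp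
  show "(z, norm z) \<in> {(c *\<^sub>R z, c * norm z) |c. True}" by (rule CollectI, rule exI[of _ 1]) simp
next
  fix x r y s assume "(x, r) \<in> {(c *\<^sub>R z, c * norm z) |c. True}" "(y, s) \<in> {(c *\<^sub>R z, c * norm z) |c. True}"
  then obtain a b where "x = a *\<^sub>R z" "r = a * norm z" "y = b *\<^sub>R z" "s = b * norm z" by auto
  then show "(x + y, r + s) \<in> {(c *\<^sub>R z, c * norm z) |c. True}"
    by (intro CollectI exI[of _ "a+b"]) (simp add: scaleR_add_left distrib_right)
next
  fix c x r assume "(x, r) \<in> {(c *\<^sub>R z, c * norm z) |c. True}"
  then obtain a where "x = a *\<^sub>R z" "r = a * norm z" by auto
  then show "(c *\<^sub>R x, c * r) \<in> {(c *\<^sub>R z, c * norm z) |c. True}"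
    by (intro CollectI exI[of _ "c*a"]) simp
next
  fix x r r' assume "(x, r) \<in> {(c *\<^sub>R z, c * norm z) |c. True}" "(x, r') \<in> {(c *\<^sub>R z, c * norm z) |c. True}"
  obtain a where a: "x = a *\<^sub>R z" "r = a * norm z" using \<open>(x, r) \<in> _\<close> by blast
  obtain b where b: "x = b *\<^sub>R z" "r' = b * norm z" using \<open>(x, r') \<in> _\<close> by blast
  show "r = r'"
  proof (cases "z = 0")
    case True then show ?thesis using a b by simp
  next
    case False then have "a = b" using a b by (metis scaleR_cancel_right)
    then show ?thesis using a b by simp
  qed
next
  fix x r assume "(x, r) \<in> {(c *\<^sub>R z, c * norm z) |c. True}"
  then obtain a where "x = a *\<^sub>R z" "r = a * norm z" by auto
  then show "r \<le> norm x" by (simp add: mult_right_mono)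
qed

lemma hbgD:
  assumes "hbg z G"
  shows "(0,0) \<in> G" "\<And>x r y s. (x,r) \<in> G \<Longrightarrow> (y,s) \<in> G \<Longrightarrow> (x+y, r+s) \<in> G"
    "\<And>c x r. (x,r) \<in> G \<Longrightarrow> (c *\<^sub>R x, c*r) \<in> G"
    "\<And>x r r'. (x,r) \<in> G \<Longrightarrow> (x,r') \<in> G \<Longrightarrow> r = r'"
    "\<And>x r. (x,r) \<in> G \<Longrightarrow> r \<le> norm x" "(z, norm z) \<in> G"
  using assms unfolding hbg_def by blast+

lemma hbg_chain:
  assumes C: "C \<in> chains {G. hbg z G}" and ne: "C \<noteq> {}"
  shows "hbg z (\<Union>C)"
proof -
  have h: "\<And>G. G \<in> C \<Longrightarrow> hbg z G" using chainsD2[OF C] by auto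
  have two: "\<exists>G\<in>C. p \<in> G \<and> q \<in> G" if pq: "p \<in> \<Union>C" "q \<in> \<Union>C" for p q
  proof -
    obtain G1 where g1: "G1 \<in> C" "p \<in> G1" using pq(1) by blast
    obtain G2 where g2: "G2 \<in> C" "q \<in> G2" using pq(2) by blast
    have "G1 \<subseteq> G2 \<or> G2 \<subseteq> G1" using chainsD[OF C g1(1) g2(1)] .
    then show ?thesis using g1 g2 by blast
  qed
  obtain G0 where G0: "G0 \<in> C" using ne by auto
  show ?thesis unfolding hbg_def
  proof (intro conjI allI impI)
    show "(0,0) \<in> \<Union>C" using hbgD(1)[OF h[OF G0]] G0 by blast
    show "(z, norm z) \<in> \<Union>C" using hbgD(6)[OF h[OF G0]] G0 by blast
  next
    fix x r y s assume "(x, r) \<in> \<Union>C" "(y, s) \<in> \<Union>C"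
    then obtain G where G: "G \<in> C" "(x,r) \<in> G" "(y,s) \<in> G" using two by blast
    show "(x + y, r + s) \<in> \<Union>C" using hbgD(2)[OF h[OF G(1)] G(2,3)] G(1) by blast
  next
    fix c x r assume "(x, r) \<in> \<Union>C"
    then obtain G where G: "G \<in> C" "(x,r) \<in> G" by blast
    show "(c *\<^sub>R x, c * r) \<in> \<Union>C" using hbgD(3)[OF h[OF G(1)] G(2)] G(1) by blast
  next
    fix x r r' assume "(x, r) \<in> \<Union>C" "(x, r') \<in> \<Union>C"
    then obtain G where G: "G \<in> C" "(x,r) \<in> G" "(x,r') \<in> G" using two by blast
    show "r = r'" using hbgD(4)[OF h[OF G(1)] G(2,3)] .
  next
    fix x r assume "(x, r) \<in> \<Union>C"
    then obtain G where G: "G \<in> C" "(x,r) \<in> G" by blast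
    show "r \<le> norm x" using hbgD(5)[OF h[OF G(1)] G(2)] .
  qed
qed

lemma hbg_extend:
  assumes G: "hbg z G" and v: "v \<notin> fst ` G"
  shows "\<exists>G'. hbg z G' \<and> G \<subseteq> G' \<and> G' \<noteq> G"
proof -
  have G0: "(0,0) \<in> G" and Gadd: "\<And>x r y s. (x,r) \<in> G \<Longrightarrow> (y,s) \<in> G \<Longrightarrow> (x+y, r+s) \<in> G"
    and Gsc: "\<And>c x r. (x,r) \<in> G \<Longrightarrow> (c *\<^sub>R x, c*r) \<in> G"
    and Gfun: "\<And>x r r'. (x,r) \<in> G \<Longrightarrow> (x,r') \<in> G \<Longrightarrow> r = r'"
    and Gle: "\<And>x r. (x,r) \<in> G \<Longrightarrow> r \<le> norm x" and Gz: "(z, norm z) \<in> G"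
    using hbgD[OF G] by blast+
  define A where "A = {r - norm (x - v) | x r. (x,r) \<in> G}"
  have key: "a \<le> norm (y + v) - s" if "a \<in> A" "(y,s) \<in> G" for a y s
  proof -
    obtain x r where a: "a = r - norm (x - v)" "(x,r) \<in> G" using \<open>a \<in> A\<close> unfolding A_def by blast
    have "r + s \<le> norm (x + y)" using Gle[OF Gadd[OF a(2) that(2)]] .
    also have "norm (x + y) \<le> norm (x - v) + norm (y + v)"
      using norm_triangle_ineq[of "x - v" "y + v"] by simp
    finally show ?thesis using a(1) by simp
  qed
  have Ane: "A \<noteq> {}" using G0 unfolding A_def by blast
  have Abdd: "bdd_above A" using key[OF _ G0] unfolding bdd_above_def by blast
  define c where "c = Sup A"
  have c1: "c \<le> norm (y + v) - s" if "(y,s) \<in> G" for y s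
    unfolding c_def by (rule cSup_least[OF Ane]) (use key that in auto)
  have c2: "r - norm (x - v) \<le> c" if "(x,r) \<in> G" for x r
    unfolding c_def by (rule cSup_upper[OF _ Abdd]) (use that in \<open>auto simp: A_def\<close>)
  define G' where "G' = {(x + t *\<^sub>R v, r + t * c) | x r t. (x,r) \<in> G}"
  have sub: "G \<subseteq> G'"
  proof
    fix p assume "p \<in> G"
    then show "p \<in> G'" unfolding G'_def
      by (cases p) (simp, metis add_0_right mult_zero_left scaleR_zero_left)
  qed
  have vin: "(v, c) \<in> G'" unfolding G'_def using G0 by (intro CollectI exI[of _ 0] exI[of _ "0::real"] exI[of _ "1::real"]) simp
  have neq: "G' \<noteq> G" using vin v by force
  have uniq: "t = t' \<and> x = x'" if "x + t *\<^sub>R v = x' + t' *\<^sub>R v" "(x,r) \<in> G" "(x',r') \<in> G" for x x' t t' r r'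
  proof (cases "t = t'")
    case True then show ?thesis using that by simp
  next
    case False
    have "(x' - x) = (t - t') *\<^sub>R v" using that(1) by (simp add: algebra_simps)
    then have "v = (1/(t - t')) *\<^sub>R (x' + (-1) *\<^sub>R x)" using False by simp
    moreover have "(x' + (-1) *\<^sub>R x, r' + (-1) * r) \<in> G" using Gadd[OF that(3) Gsc[OF that(2)]] .
    ultimately have "(v, (1/(t-t')) * (r' + (-1) * r)) \<in> G" using Gsc by metis
    then show ?thesis using v by force
  qed
  have dom: "r + t * c \<le> norm (x + t *\<^sub>R v)" if "(x,r) \<in> G" for x r t
  proof -
    consider "t = 0" | "t > 0" | "t < 0" by linarith
    then show ?thesis
    proof cases
      case 1 then show ?thesis using Gle[OF that] by simp
    next
      case 2
      have "c \<le> norm ((1/t) *\<^sub>R x + v) - (1/t) * r" using c1[OF Gsc[OF that, of "1/t"]] .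
      then have "t * c \<le> t * (norm ((1/t) *\<^sub>R x + v) - (1/t) * r)" using 2 by (simp add: mult_left_mono)
      also have "\<dots> = norm (t *\<^sub>R ((1/t) *\<^sub>R x + v)) - r" using 2 by (simp add: right_diff_distrib)
      also have "t *\<^sub>R ((1/t) *\<^sub>R x + v) = x + t *\<^sub>R v" using 2 by (simp add: scaleR_add_right)
      finally show ?thesis by simp
    next
      case 3
      have e: "x + t *\<^sub>R v = (-t) *\<^sub>R ((1/(-t)) *\<^sub>R x - v)" using 3 by (simp add: scaleR_diff_right)
      have n: "norm (x + t *\<^sub>R v) = (-t) * norm ((1/(-t)) *\<^sub>R x - v)" unfolding e using 3 by simp
      have "(1/(-t)) * r - norm ((1/(-t)) *\<^sub>R x - v) \<le> c" using c2[OF Gsc[OF that, of "1/(-t)"]] .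
      then have "(-t) * ((1/(-t)) * r - norm ((1/(-t)) *\<^sub>R x - v)) \<le> (-t) * c" using 3 by (simp add: mult_left_mono)
      moreover have "(-t) * ((1/(-t)) * r - norm ((1/(-t)) *\<^sub>R x - v)) = r - (-t) * norm ((1/(-t)) *\<^sub>R x - v)"
        using 3 by (simp add: right_diff_distrib)
      ultimately show ?thesis using n by simp
    qed
  qed
  have "hbg z G'" unfolding hbg_def
  proof (intro conjI allI impI)
    show "(0,0) \<in> G'" using sub G0 by blast
    show "(z, norm z) \<in> G'" using sub Gz by blast
  next
    fix x r y s assume "(x, r) \<in> G'" "(y, s) \<in> G'"
    then obtain x1 r1 t1 x2 r2 t2 where "x = x1 + t1 *\<^sub>R v" "r = r1 + t1 * c" "(x1,r1) \<in> G"
       "y = x2 + t2 *\<^sub>R v" "s = r2 + t2 * c" "(x2,r2) \<in> G" unfolding G'_def by blast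
    then show "(x + y, r + s) \<in> G'" unfolding G'_def
      by (intro CollectI exI[of _ "x1+x2"] exI[of _ "r1+r2"] exI[of _ "t1+t2"])
        (auto simp: algebra_simps Gadd)
  next
    fix a x r assume "(x, r) \<in> G'"
    then obtain x1 r1 t1 where "x = x1 + t1 *\<^sub>R v" "r = r1 + t1 * c" "(x1,r1) \<in> G" unfolding G'_def by blast
    then show "(a *\<^sub>R x, a * r) \<in> G'" unfolding G'_def
      by (intro CollectI exI[of _ "a *\<^sub>R x1"] exI[of _ "a*r1"] exI[of _ "a*t1"])
        (auto simp: algebra_simps Gsc)
  next
    fix x r r' assume "(x, r) \<in> G'" "(x, r') \<in> G'"
    then obtain x1 r1 t1 x2 r2 t2 where "x = x1 + t1 *\<^sub>R v" "r = r1 + t1 * c" "(x1,r1) \<in> G"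
       "x = x2 + t2 *\<^sub>R v" "r' = r2 + t2 * c" "(x2,r2) \<in> G" unfolding G'_def by blast
    then show "r = r'" using uniq[of x1 t1 x2 t2 r1 r2] Gfun by auto
  next
    fix x r assume "(x, r) \<in> G'"
    then obtain x1 r1 t1 where "x = x1 + t1 *\<^sub>R v" "r = r1 + t1 * c" "(x1,r1) \<in> G" unfolding G'_def by blast
    then show "r \<le> norm x" using dom by simp
  qed
  then show ?thesis using sub neq by blast
qed

lemma hahn_banach_norming:
  fixes z :: "'b::real_normed_vector"
  shows "\<exists>f. bounded_linear f \<and> (\<forall>w. \<bar>f w\<bar> \<le> norm w) \<and> f z = norm z"
proof -
  have "\<exists>M\<in>{G. hbg z G}. \<forall>X\<in>{G. hbg z G}. M \<subseteq> X \<longrightarrow> X = M"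
  proof (rule Zorn_Lemma2, intro ballI)
    fix C assume C: "C \<in> chains {G. hbg z G}"
    show "\<exists>U\<in>{G. hbg z G}. \<forall>X\<in>C. X \<subseteq> U"
    proof (cases "C = {}")
      case True then show ?thesis using hbg_init by blast
    next
      case False then show ?thesis using hbg_chain[OF C False] by blast
    qed
  qed
  then obtain G where G: "hbg z G" and max: "\<And>X. hbg z X \<Longrightarrow> G \<subseteq> X \<Longrightarrow> X = G" by blast
  have full: "\<forall>x. \<exists>r. (x,r) \<in> G"
  proof (rule ccontr)
    assume "\<not> ?thesis"
    then obtain v where "v \<notin> fst ` G" by force
    then show False using hbg_extend[OF G] max by blast
  qed
  have G0: "(0,0) \<in> G" and Gadd: "\<And>x r y s. (x,r) \<in> G \<Longrightarrow> (y,s) \<in> G \<Longrightarrow> (x+y, r+s) \<in> G"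
    and Gsc: "\<And>c x r. (x,r) \<in> G \<Longrightarrow> (c *\<^sub>R x, c*r) \<in> G"
    and Gfun: "\<And>x r r'. (x,r) \<in> G \<Longrightarrow> (x,r') \<in> G \<Longrightarrow> r = r'"
    and Gle: "\<And>x r. (x,r) \<in> G \<Longrightarrow> r \<le> norm x" and Gz: "(z, norm z) \<in> G"
    using hbgD[OF G] by blast+
  define f where "f x = (THE r. (x,r) \<in> G)" for x
  have fG: "(x, f x) \<in> G" for x
    unfolding f_def using full Gfun by (metis theI)
  have fv: "f x = r" if "(x,r) \<in> G" for x r using Gfun[OF that fG] by simp
  have add: "f (x + y) = f x + f y" for x y using fv[OF Gadd[OF fG fG]] .
  have sc: "f (c *\<^sub>R x) = c * f x" for c x using fv[OF Gsc[OF fG]] .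
  have ab: "\<bar>f w\<bar> \<le> norm w" for w
  proof -
    have "f w \<le> norm w" using Gle[OF fG] .
    moreover have "- f w \<le> norm w" using Gle[OF fG, of "(-1) *\<^sub>R w"] sc[of "-1" w] by simp
    ultimately show ?thesis by simp
  qed
  have "bounded_linear f"
    by (rule bounded_linear_intro[where K=1]) (use add sc ab in auto)
  then show ?thesis using ab fv[OF Gz] by blast
qed


section \<open>Strict convexity from wUR\<close>

lemma wUR_eq:
  fixes a b :: "'b::banach"
  assumes w: "wUR TYPE('b)" and a: "norm a = 1" and b: "norm b = 1"
    and f: "bounded_linear f" "\<And>v. \<bar>f v\<bar> \<le> norm v" and fa: "f a = 1" and fb: "f b = 1"
  shows "a = b"
proof -
  obtain g where g: "bounded_linear g" "\<And>v. \<bar>g v\<bar> \<le> norm v" "g (a - b) = norm (a - b)"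
    using hahn_banach_norming[of "a - b"] by blast
  have half: "norm ((1/2) *\<^sub>R (a + b)) \<ge> 1"
  proof -
    have "f ((1/2) *\<^sub>R (a + b)) = 1"
      using fa fb linear_add[OF bounded_linear.linear[OF f(1)]] linear_scale[OF bounded_linear.linear[OF f(1)]]
      by simp
    then show ?thesis using f(2)[of "(1/2) *\<^sub>R (a + b)"] by simp
  qed
  have "norm (a - b) < e" if e: "e > 0" for e
  proof -
    obtain d where d: "d > 0" "\<And>x y::'b. norm x = 1 \<and> norm y = 1 \<and> norm ((1/2) *\<^sub>R (x + y)) > 1 - d
             \<longrightarrow> \<bar>g (x - y)\<bar> < e"
      using w g(1) e unfolding wUR_def by blast
    have "\<bar>g (a - b)\<bar> < e" using d(2)[of a b] a b half d(1) by linarith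
    then show ?thesis using g(3) by simp
  qed
  then have "norm (a - b) = 0"
    by (metis less_irrefl norm_ge_zero order_le_less)
  then show ?thesis by simp
qed

lemma wUR_parallel:
  fixes w :: "nat \<Rightarrow> 'b::banach"
  assumes wur: "wUR TYPE('b)" and lam: "\<And>k. k < m \<Longrightarrow> lam k > 0"
    and eq: "norm (\<Sum>k<m. lam k *\<^sub>R w k) = (\<Sum>k<m. lam k * norm (w k))"
    and nz: "(\<Sum>k<m. lam k * norm (w k)) \<noteq> 0" and k: "k < m"
  shows "w k = (norm (w k) / (\<Sum>j<m. lam j * norm (w j))) *\<^sub>R (\<Sum>j<m. lam j *\<^sub>R w j)"
proof -
  define W where "W = (\<Sum>j<m. lam j *\<^sub>R w j)"
  define S where "S = (\<Sum>j<m. lam j * norm (w j))"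
  have WS: "norm W = S" using eq unfolding W_def S_def .
  have "S \<noteq> 0" using nz unfolding S_def .
  then have S0: "S > 0" using WS norm_ge_zero[of W] by linarith
  obtain f where f: "bounded_linear f" "\<And>v. \<bar>f v\<bar> \<le> norm v" "f W = norm W"
    using hahn_banach_norming[of W] by blast
  have lin: "linear f" using f(1) bounded_linear.linear by blast
  have fW: "f W = (\<Sum>j<m. lam j * f (w j))"
  proof -
    have "f W = (\<Sum>j<m. f (lam j *\<^sub>R w j))" unfolding W_def by (rule linear_sum[OF lin, unfolded o_def])
    also have "\<dots> = (\<Sum>j<m. lam j * f (w j))" by (rule sum.cong) (auto simp: linear_scale[OF lin])
    finally show ?thesis .
  qed
  have fle: "lam j * f (w j) \<le> lam j * norm (w j)" if "j < m" for j
    using f(2)[of "w j"] lam[OF that] by (intro mult_left_mono) auto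
  have "(\<Sum>j<m. lam j * norm (w j) - lam j * f (w j)) = S - f W"
    unfolding sum_subtractf S_def fW ..
  then have "(\<Sum>j<m. lam j * norm (w j) - lam j * f (w j)) = 0"
    using f(3) WS by simp
  then have "\<forall>j\<in>{..<m}. lam j * norm (w j) - lam j * f (w j) = 0"
    using sum_nonneg_eq_0_iff[of "{..<m}" "\<lambda>j. lam j * norm (w j) - lam j * f (w j)"] fle by simp
  then have "lam k * norm (w k) - lam k * f (w k) = 0" using k by blast
  then have "lam k * (norm (w k) - f (w k)) = 0" by (simp add: right_diff_distrib)
  then have fk: "f (w k) = norm (w k)" using lam[OF k] by simp
  show ?thesis
  proof (cases "w k = 0")
    case True then show ?thesis by simp
  next
    case False
    have n0: "norm (w k) > 0" using False by simp
    have "(1/norm (w k)) *\<^sub>R w k = (1/S) *\<^sub>R W"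
    proof (rule wUR_eq[OF wur _ _ f(1) f(2)])
      show "norm ((1/norm (w k)) *\<^sub>R w k) = 1" using n0 by simp
      show "norm ((1/S) *\<^sub>R W) = 1" using S0 WS by simp
      show "f ((1/norm (w k)) *\<^sub>R w k) = 1" using fk n0 linear_scale[OF lin] by simp
      show "f ((1/S) *\<^sub>R W) = 1" using f(3) WS S0 linear_scale[OF lin] by simp
    qed
    then have "norm (w k) *\<^sub>R ((1/norm (w k)) *\<^sub>R w k) = norm (w k) *\<^sub>R ((1/S) *\<^sub>R W)" by simp
    then show ?thesis using n0 unfolding W_def[symmetric] S_def[symmetric] by simp
  qed
qed

section \<open>Strong measurability\<close>

lemma SM_simple: "simple_function M f \<Longrightarrow> strongly_measurable M f"
  unfolding strongly_measurable_def by (intro exI[of _ "\<lambda>n. f"]) auto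

lemma SM_comp2:
  fixes f :: "'a \<Rightarrow> 'b::real_normed_vector" and g :: "'a \<Rightarrow> 'c::real_normed_vector"
    and h :: "'b \<Rightarrow> 'c \<Rightarrow> 'd::real_normed_vector"
  assumes f: "strongly_measurable M f" and g: "strongly_measurable M g"
    and h: "\<And>a b. isCont (\<lambda>p. h (fst p) (snd p)) (a, b)"
  shows "strongly_measurable M (\<lambda>x. h (f x) (g x))"
proof -
  obtain s where s: "\<And>n. simple_function M (s n)" "AE x in M. (\<lambda>n. s n x) \<longlonglongrightarrow> f x"
    using f unfolding strongly_measurable_def by blast
  obtain t where t: "\<And>n. simple_function M (t n)" "AE x in M. (\<lambda>n. t n x) \<longlonglongrightarrow> g x"
    using g unfolding strongly_measurable_def by blast
  show ?thesis unfolding strongly_measurable_def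
  proof (intro exI conjI allI)
    show "simple_function M (\<lambda>x. h (s n x) (t n x))" for n
      by (rule simple_function_compose2[OF s(1) t(1)])
    show "AE x in M. (\<lambda>n. h (s n x) (t n x)) \<longlonglongrightarrow> h (f x) (g x)"
      using s(2) t(2)
    proof eventually_elim
      case (elim x)
      have "(\<lambda>n. (s n x, t n x)) \<longlonglongrightarrow> (f x, g x)" using elim by (rule tendsto_Pair)
      from isCont_tendsto_compose[OF h this] show ?case by simp
    qed
  qed
qed

lemma SM_comp:
  fixes f :: "'a \<Rightarrow> 'b::real_normed_vector" and h :: "'b \<Rightarrow> 'd::real_normed_vector"
  assumes f: "strongly_measurable M f" and h: "\<And>a. isCont h a"
  shows "strongly_measurable M (\<lambda>x. h (f x))"
proof -
  obtain s where s: "\<And>n. simple_function M (s n)" "AE x in M. (\<lambda>n. s n x) \<longlonglongrightarrow> f x"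
    using f unfolding strongly_measurable_def by blast
  show ?thesis unfolding strongly_measurable_def
  proof (intro exI conjI allI)
    show "simple_function M (\<lambda>x. h (s n x))" for n
      using simple_function_compose[OF s(1), of h n] by (simp add: comp_def)
    show "AE x in M. (\<lambda>n. h (s n x)) \<longlonglongrightarrow> h (f x)"
      using s(2) by eventually_elim (rule isCont_tendsto_compose[OF h])
  qed
qed

lemma SM_add: "strongly_measurable M f \<Longrightarrow> strongly_measurable M g \<Longrightarrow>
    strongly_measurable M (\<lambda>x. f x + g x)"
  by (rule SM_comp2[where h="(+)"]) (auto intro!: continuous_intros)

lemma SM_scaleR: "strongly_measurable M (f::'a\<Rightarrow>real) \<Longrightarrow> strongly_measurable M g \<Longrightarrow>
    strongly_measurable M (\<lambda>x. f x *\<^sub>R g x)"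
  by (rule SM_comp2[where h="(*\<^sub>R)"]) (auto intro!: continuous_intros)

lemma SM_mult: "strongly_measurable M (f::'a\<Rightarrow>real) \<Longrightarrow> strongly_measurable M g \<Longrightarrow>
    strongly_measurable M (\<lambda>x. f x * g x)"
  using SM_scaleR[of M f g] by simp

lemma SM_const: "strongly_measurable M (\<lambda>x. c)"
  by (rule SM_simple) simp

lemma SM_sum: "(\<And>k. k < (m::nat) \<Longrightarrow> strongly_measurable M (f k)) \<Longrightarrow>
    strongly_measurable M (\<lambda>x. \<Sum>k<m. f k x)"
proof (induction m)
  case 0 then show ?case using SM_const[of M 0] by simp
next
  case (Suc m)
  then show ?case using SM_add[of M "\<lambda>x. \<Sum>k<m. f k x" "f m"] by simp
qed

lemma complete_AE_measurable:
  fixes g :: "'a \<Rightarrow> 'c::topological_space"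
  assumes cm: "complete_measure M" and g': "g' \<in> borel_measurable M" and ae: "AE x in M. g x = g' x"
  shows "g \<in> borel_measurable M"
proof (rule measurableI)
  fix A :: "'c set" assume "A \<in> sets borel"
  then have "g' -` A \<inter> space M \<in> sets M" by (rule measurable_sets[OF g'])
  moreover have "AE x in M. x \<in> g' -` A \<inter> space M \<longleftrightarrow> x \<in> g -` A \<inter> space M"
    using ae by (rule AE_mp) (intro AE_I2, auto)
  ultimately show "g -` A \<inter> space M \<in> sets M"
    using complete_measure.in_sets_AE[OF cm, of "g' -` A \<inter> space M" "g -` A \<inter> space M"] by blast
qed auto

lemma SM_measurable:
  fixes g :: "'a \<Rightarrow> 'c::real_normed_vector"
  assumes cm: "complete_measure M" and g: "strongly_measurable M g"
  shows "g \<in> borel_measurable M"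
proof -
  obtain s where s: "\<And>n. simple_function M (s n)" "AE x in M. (\<lambda>n. s n x) \<longlonglongrightarrow> g x"
    using g unfolding strongly_measurable_def by blast
  obtain N where N: "{x \<in> space M. \<not> (\<lambda>n. s n x) \<longlonglongrightarrow> g x} \<subseteq> N" "emeasure M N = 0" "N \<in> sets M"
    using s(2) by (rule AE_E)
  define s' where "s' n x = (if x \<in> N then 0 else s n x)" for n x
  define g' where "g' x = (if x \<in> N then 0 else g x)" for x
  have "s' n \<in> borel_measurable M" for n
    unfolding s'_def using N(3) borel_measurable_simple_function[OF s(1)]
    by (intro measurable_If_set) auto
  moreover have "(\<lambda>n. s' n x) \<longlonglongrightarrow> g' x" if "x \<in> space M" for x
    using N(1) that unfolding s'_def g'_def by (cases "x \<in> N") auto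
  ultimately have "g' \<in> borel_measurable M" by (rule borel_measurable_LIMSEQ_metric)
  moreover have "AE x in M. g x = g' x"
    using AE_not_in[of N M] N by (auto simp: g'_def null_sets_def)
  ultimately show ?thesis by (rule complete_AE_measurable[OF cm])
qed

lemma measurable_SM_real:
  fixes g :: "'a \<Rightarrow> real"
  assumes "g \<in> borel_measurable M"
  shows "strongly_measurable M g"
proof -
  obtain F where "\<forall>i. simple_function M (F i)" "\<forall>x\<in>space M. (\<lambda>i. F i x) \<longlonglongrightarrow> g x"
    using borel_measurable_implies_sequence_metric[OF assms, of 0] by blast
  then show ?thesis unfolding strongly_measurable_def by (intro exI[of _ F]) auto
qed


lemma SM_app:
  fixes s :: "'a \<Rightarrow> 'c" and f :: "'a \<Rightarrow> 'b::real_normed_vector" and F :: "'c \<Rightarrow> 'b \<Rightarrow> 'd::real_normed_vector"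
  assumes s: "simple_function M s" and f: "strongly_measurable M f" and F: "\<And>c a. isCont (F c) a"
  shows "strongly_measurable M (\<lambda>x. F (s x) (f x))"
proof -
  obtain t where t: "\<And>n. simple_function M (t n)" "AE x in M. (\<lambda>n. t n x) \<longlonglongrightarrow> f x"
    using f unfolding strongly_measurable_def by blast
  show ?thesis unfolding strongly_measurable_def
  proof (intro exI conjI allI)
    show "simple_function M (\<lambda>x. F (s x) (t n x))" for n
      by (rule simple_function_compose2[OF s t(1)])
    show "AE x in M. (\<lambda>n. F (s x) (t n x)) \<longlonglongrightarrow> F (s x) (f x)"
      using t(2) by eventually_elim (rule isCont_tendsto_compose[OF F])
  qed
qed

lemma SM_norm: "strongly_measurable M f \<Longrightarrow> strongly_measurable M (\<lambda>x. norm (f x))"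
  by (rule SM_comp) (auto intro!: continuous_intros)

lemma L1I:
  assumes cm: "complete_measure M" and f: "strongly_measurable M f" and w: "integrable M w"
    and le: "\<And>x. x \<in> space M \<Longrightarrow> norm (f x) \<le> w x"
  shows "f \<in> L1 M"
proof -
  have m: "(\<lambda>x. norm (f x)) \<in> borel_measurable M" by (rule SM_measurable[OF cm SM_norm[OF f]])
  have le2: "norm (norm (f x)) \<le> norm (w x)" if x: "x \<in> space M" for x
  proof -
    have "norm (f x) \<le> w x" by (rule le[OF x])
    also have "w x \<le> \<bar>w x\<bar>" by (rule abs_ge_self)
    finally show ?thesis by simp
  qed
  have "integrable M (\<lambda>x. norm (f x))"
    by (rule Bochner_Integration.integrable_bound[OF w m]) (rule AE_I2, rule le2)
  then have "(\<integral>\<^sup>+x. ennreal (norm (f x)) \<partial>M) < \<infinity>"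
    unfolding integrable_iff_bounded by simp
  then show ?thesis unfolding L1_def using f by simp
qed

lemma L1D:
  assumes cm: "complete_measure M" and f: "f \<in> L1 M"
  shows "strongly_measurable M f" "integrable M (\<lambda>x. norm (f x))"
    "(\<lambda>x. norm (f x)) \<in> borel_measurable M"
    "L1norm M f = (\<integral>x. norm (f x) \<partial>M)"
proof -
  show sm: "strongly_measurable M f" using f unfolding L1_def by simp
  show m: "(\<lambda>x. norm (f x)) \<in> borel_measurable M" by (rule SM_measurable[OF cm SM_norm[OF sm]])
  show i: "integrable M (\<lambda>x. norm (f x))"
    unfolding integrable_iff_bounded using m f unfolding L1_def by simp
  have "(\<integral>\<^sup>+x. ennreal (norm (f x)) \<partial>M) = ennreal (\<integral>x. norm (f x) \<partial>M)"
    by (rule nn_integral_eq_integral[OF i]) simp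
  then show "L1norm M f = (\<integral>x. norm (f x) \<partial>M)"
    unfolding L1norm_def by simp
qed

lemma L1norm_nonneg: "complete_measure M \<Longrightarrow> f \<in> L1 M \<Longrightarrow> L1norm M f \<ge> 0"
  using L1D(4) by (simp add: L1norm_def)

lemma L1_add:
  assumes cm: "complete_measure M" and f: "f \<in> L1 M" and g: "g \<in> L1 M"
  shows "(\<lambda>x. f x + g x) \<in> L1 M"
  by (rule L1I[OF cm SM_add[OF L1D(1)[OF cm f] L1D(1)[OF cm g]] Bochner_Integration.integrable_add[OF L1D(2)[OF cm f] L1D(2)[OF cm g]]])
    (rule norm_triangle_ineq)

lemma L1_diff:
  assumes cm: "complete_measure M" and f: "f \<in> L1 M" and g: "g \<in> L1 M"
  shows "(\<lambda>x. f x - g x) \<in> L1 M"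
proof (rule L1I[OF cm _ Bochner_Integration.integrable_add[OF L1D(2)[OF cm f] L1D(2)[OF cm g]]])
  show "strongly_measurable M (\<lambda>x. f x - g x)"
    by (rule SM_comp2[OF L1D(1)[OF cm f] L1D(1)[OF cm g], where h="(-)"]) (auto intro!: continuous_intros)
qed (rule norm_triangle_ineq4)

lemma L1_mult:
  assumes cm: "complete_measure M" and f: "f \<in> L1 M" and h: "h \<in> borel_measurable M"
    and hb: "\<And>x. x \<in> space M \<Longrightarrow> \<bar>h x\<bar> \<le> H"
  shows "(\<lambda>x. h x *\<^sub>R f x) \<in> L1 M"
proof (rule L1I[OF cm SM_scaleR[OF measurable_SM_real[OF h] L1D(1)[OF cm f]]])
  show "integrable M (\<lambda>x. H * norm (f x))" using L1D(2)[OF cm f] by simp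
  show "norm (h x *\<^sub>R f x) \<le> H * norm (f x)" if "x \<in> space M" for x
    using hb[OF that] by (simp add: mult_right_mono)
qed

lemma L1_sum:
  assumes cm: "complete_measure M" and f: "\<And>k. k < (m::nat) \<Longrightarrow> f k \<in> L1 M"
  shows "(\<lambda>x. \<Sum>k<m. f k x) \<in> L1 M"
  using f
proof (induction m)
  case 0
  have "(\<lambda>x. 0::'b) \<in> L1 M" by (rule L1I[OF cm SM_const, of "\<lambda>x. 0"]) auto
  then show ?case by simp
next
  case (Suc m)
  then show ?case using L1_add[OF cm, of "\<lambda>x. \<Sum>k<m. f k x" "f m"] by simp
qed

lemma L1_mult_norm:
  assumes cm: "complete_measure M" and f: "f \<in> L1 M" and h: "h \<in> borel_measurable M"
    and hb: "\<And>x. x \<in> space M \<Longrightarrow> \<bar>h x\<bar> \<le> H"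
  shows "L1norm M (\<lambda>x. h x *\<^sub>R f x) = (\<integral>x. \<bar>h x\<bar> * norm (f x) \<partial>M)"
  using L1D(4)[OF cm L1_mult[OF cm f h hb]] by simp

lemma dualD:
  fixes \<phi> :: "('a \<Rightarrow> 'b::real_normed_vector) \<Rightarrow> real"
  assumes "\<phi> \<in> L1_dual M"
  shows "\<And>f g. f \<in> L1 M \<Longrightarrow> g \<in> L1 M \<Longrightarrow> \<phi> (\<lambda>x. f x + g x) = \<phi> f + \<phi> g"
    "\<And>c f. f \<in> L1 M \<Longrightarrow> \<phi> (\<lambda>x. c *\<^sub>R f x) = c * \<phi> f"
    "\<exists>K\<ge>0. \<forall>f\<in>L1 M. \<bar>\<phi> f\<bar> \<le> K * L1norm M f"
proof -
  show "\<And>f g. f \<in> L1 M \<Longrightarrow> g \<in> L1 M \<Longrightarrow> \<phi> (\<lambda>x. f x + g x) = \<phi> f + \<phi> g"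
    "\<And>c f. f \<in> L1 M \<Longrightarrow> \<phi> (\<lambda>x. c *\<^sub>R f x) = c * \<phi> f"
    using assms unfolding L1_dual_def by blast+
  obtain K where K: "\<forall>f\<in>L1 M. \<bar>\<phi> f\<bar> \<le> K * L1norm M f" using assms unfolding L1_dual_def by blast
  have "\<forall>f\<in>L1 M. \<bar>\<phi> f\<bar> \<le> max K 0 * L1norm M f"
  proof
    fix f :: "'a \<Rightarrow> 'b" assume f: "f \<in> L1 M"
    have "L1norm M f \<ge> 0" unfolding L1norm_def by simp
    then have "K * L1norm M f \<le> max K 0 * L1norm M f" by (intro mult_right_mono) auto
    then show "\<bar>\<phi> f\<bar> \<le> max K 0 * L1norm M f" using K f by fastforce
  qed
  then show "\<exists>K\<ge>0. \<forall>f\<in>L1 M. \<bar>\<phi> f\<bar> \<le> K * L1norm M f" by (intro exI[of _ "max K 0"]) auto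
qed

lemma dual_diff:
  assumes cm: "complete_measure M" and \<phi>: "\<phi> \<in> L1_dual M" and f: "f \<in> L1 M" and g: "g \<in> L1 M"
  shows "\<phi> f - \<phi> g = \<phi> (\<lambda>x. f x - g x)"
proof -
  have "\<phi> (\<lambda>x. g x + (f x - g x)) = \<phi> g + \<phi> (\<lambda>x. f x - g x)"
    by (rule dualD(1)[OF \<phi> g L1_diff[OF cm f g]])
  moreover have "(\<lambda>x. g x + (f x - g x)) = f" by simp
  ultimately show ?thesis by simp
qed

lemma dual_add:
  assumes cm: "complete_measure M" and \<phi>: "\<phi> \<in> L1_dual M" and f: "f \<in> L1 M" and g: "g \<in> L1 M"
  shows "\<phi> (\<lambda>x. f x + g x) = \<phi> f + \<phi> g"
  by (rule dualD(1)[OF \<phi> f g])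

lemma dual_AE:
  assumes cm: "complete_measure M" and \<phi>: "\<phi> \<in> L1_dual M" and f: "f \<in> L1 M" and g: "g \<in> L1 M"
    and ae: "AE x in M. f x = g x"
  shows "\<phi> f = \<phi> g"
proof -
  obtain K where K: "K \<ge> 0" "\<forall>f\<in>L1 M. \<bar>\<phi> f\<bar> \<le> K * L1norm M f" using dualD(3)[OF \<phi>] by blast
  have d: "(\<lambda>x. f x - g x) \<in> L1 M" by (rule L1_diff[OF cm f g])
  have "L1norm M (\<lambda>x. f x - g x) = 0"
    unfolding L1D(4)[OF cm d] by (rule integral_eq_zero_AE) (use ae in auto)
  then have "\<phi> (\<lambda>x. f x - g x) = 0" using K(2) d by fastforce
  then show ?thesis using dual_diff[OF cm \<phi> f g] by simp
qed

lemma dual_mult: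
  fixes \<phi> :: "('a \<Rightarrow> 'b::real_normed_vector) \<Rightarrow> real"
  assumes cm: "complete_measure M" and \<phi>: "\<phi> \<in> L1_dual M" and h: "h \<in> borel_measurable M"
    and hb: "\<And>x. x \<in> space M \<Longrightarrow> \<bar>h x\<bar> \<le> H"
  shows "(\<lambda>f. \<phi> (\<lambda>x. h x *\<^sub>R f x)) \<in> L1_dual M"
proof -
  obtain K where K: "K \<ge> 0" "\<forall>f\<in>L1 M. \<bar>\<phi> f\<bar> \<le> K * L1norm M f" using dualD(3)[OF \<phi>] by blast
  note hf = L1_mult[OF cm _ h hb]
  show ?thesis unfolding L1_dual_def
  proof (intro CollectI conjI allI ballI)
    fix f g :: "'a \<Rightarrow> 'b" assume f: "f \<in> L1 M" and g: "g \<in> L1 M"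
    have "(\<lambda>x. h x *\<^sub>R (f x + g x)) = (\<lambda>x. h x *\<^sub>R f x + h x *\<^sub>R g x)" by (simp add: scaleR_add_right)
    then show "\<phi> (\<lambda>x. h x *\<^sub>R (f x + g x)) = \<phi> (\<lambda>x. h x *\<^sub>R f x) + \<phi> (\<lambda>x. h x *\<^sub>R g x)"
      using dualD(1)[OF \<phi> hf[OF f] hf[OF g]] by simp
  next
    fix c and f :: "'a \<Rightarrow> 'b" assume f: "f \<in> L1 M"
    have "(\<lambda>x. h x *\<^sub>R (c *\<^sub>R f x)) = (\<lambda>x. c *\<^sub>R (h x *\<^sub>R f x))" by (simp add: mult.commute)
    then show "\<phi> (\<lambda>x. h x *\<^sub>R (c *\<^sub>R f x)) = c * \<phi> (\<lambda>x. h x *\<^sub>R f x)"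
      using dualD(2)[OF \<phi> hf[OF f]] by simp
  next
    show "\<exists>K'. \<forall>f\<in>L1 M. \<bar>\<phi> (\<lambda>x. h x *\<^sub>R f x)\<bar> \<le> K' * L1norm M f"
    proof (intro exI[of _ "K * \<bar>H\<bar>"] ballI)
      fix f :: "'a \<Rightarrow> 'b" assume f: "f \<in> L1 M"
      have "L1norm M (\<lambda>x. h x *\<^sub>R f x) = (\<integral>x. \<bar>h x\<bar> * norm (f x) \<partial>M)"
        by (rule L1_mult_norm[OF cm f h hb])
      also have "\<dots> \<le> (\<integral>x. \<bar>H\<bar> * norm (f x) \<partial>M)"
      proof (rule integral_mono)
        show "integrable M (\<lambda>x. \<bar>h x\<bar> * norm (f x))"
          using L1D(2)[OF cm hf[OF f]] by simp
        show "integrable M (\<lambda>x. \<bar>H\<bar> * norm (f x))" using L1D(2)[OF cm f] by simp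
        show "\<bar>h x\<bar> * norm (f x) \<le> \<bar>H\<bar> * norm (f x)" if "x \<in> space M" for x
          using hb[OF that] abs_ge_self[of H] by (intro mult_right_mono) auto
      qed
      also have "\<dots> = \<bar>H\<bar> * L1norm M f" using L1D(4)[OF cm f] by simp
      finally have "L1norm M (\<lambda>x. h x *\<^sub>R f x) \<le> \<bar>H\<bar> * L1norm M f" .
      then have "K * L1norm M (\<lambda>x. h x *\<^sub>R f x) \<le> K * (\<bar>H\<bar> * L1norm M f)"
        using K(1) by (intro mult_left_mono)
      then show "\<bar>\<phi> (\<lambda>x. h x *\<^sub>R f x)\<bar> \<le> K * \<bar>H\<bar> * L1norm M f"
        using K(2) hf[OF f] by (simp add: mult.assoc) (meson order_trans)
    qed
  qed
qed


lemma theta_int: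
  fixes s :: "'a \<Rightarrow> 'c" and F :: "'c \<Rightarrow> 'b::real_normed_vector \<Rightarrow> real"
  assumes cm: "complete_measure M" and s: "simple_function M s"
    and F: "\<And>c. bounded_linear (F c)" and Fb: "\<And>c w. \<bar>F c w\<bar> \<le> norm w"
    and h: "h \<in> borel_measurable M" and hb: "\<And>x. x \<in> space M \<Longrightarrow> \<bar>h x\<bar> \<le> H"
    and f: "f \<in> L1 M"
  shows "integrable M (\<lambda>x. h x * F (s x) (f x))"
proof -
  have sm: "strongly_measurable M (\<lambda>x. h x * F (s x) (f x))"
    by (rule SM_mult[OF measurable_SM_real[OF h] SM_app[OF s L1D(1)[OF cm f]]])
      (rule linear_continuous_at[OF F])
  show ?thesis
  proof (rule Bochner_Integration.integrable_bound[OF _ SM_measurable[OF cm sm]])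
    show "integrable M (\<lambda>x. \<bar>H\<bar> * norm (f x))" using L1D(2)[OF cm f] by simp
    show "AE x in M. norm (h x * F (s x) (f x)) \<le> norm (\<bar>H\<bar> * norm (f x))"
    proof (rule AE_I2)
      fix x assume x: "x \<in> space M"
      have "\<bar>h x\<bar> * \<bar>F (s x) (f x)\<bar> \<le> \<bar>H\<bar> * norm (f x)"
        using hb[OF x] Fb[of "s x" "f x"] abs_ge_self[of H]
        by (intro mult_mono) auto
      then show "norm (h x * F (s x) (f x)) \<le> norm (\<bar>H\<bar> * norm (f x))"
        by (simp add: abs_mult)
    qed
  qed
qed

lemma dual_theta:
  fixes s :: "'a \<Rightarrow> 'c" and F :: "'c \<Rightarrow> 'b::real_normed_vector \<Rightarrow> real"
  assumes cm: "complete_measure M" and s: "simple_function M s"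
    and F: "\<And>c. bounded_linear (F c)" and Fb: "\<And>c w. \<bar>F c w\<bar> \<le> norm w"
    and h: "h \<in> borel_measurable M" and hb: "\<And>x. x \<in> space M \<Longrightarrow> \<bar>h x\<bar> \<le> H"
  shows "(\<lambda>f::'a \<Rightarrow> 'b. \<integral>x. h x * F (s x) (f x) \<partial>M) \<in> L1_dual M"
  unfolding L1_dual_def
proof (intro CollectI conjI allI ballI)
  have ti: "\<And>f. f \<in> L1 M \<Longrightarrow> integrable M (\<lambda>x. h x * F (s x) (f x))"
    by (rule theta_int[where F=F and h=h and H=H and s=s and M=M]) (auto intro: cm s F Fb h hb)
  fix f g :: "'a \<Rightarrow> 'b" assume f: "f \<in> L1 M" and g: "g \<in> L1 M"
  have "(\<lambda>x. h x * F (s x) (f x + g x)) = (\<lambda>x. h x * F (s x) (f x) + h x * F (s x) (g x))"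
    using linear_add[OF bounded_linear.linear[OF F]] by (simp add: distrib_left)
  then show "(\<integral>x. h x * F (s x) (f x + g x) \<partial>M) =
      (\<integral>x. h x * F (s x) (f x) \<partial>M) + (\<integral>x. h x * F (s x) (g x) \<partial>M)"
    using Bochner_Integration.integral_add[OF ti[OF f] ti[OF g]] by simp
next
  have ti: "\<And>f. f \<in> L1 M \<Longrightarrow> integrable M (\<lambda>x. h x * F (s x) (f x))"
    by (rule theta_int[where F=F and h=h and H=H and s=s and M=M]) (auto intro: cm s F Fb h hb)
  fix c and f :: "'a \<Rightarrow> 'b" assume f: "f \<in> L1 M"
  have "(\<lambda>x. h x * F (s x) (c *\<^sub>R f x)) = (\<lambda>x. c * (h x * F (s x) (f x)))"
    using linear_scale[OF bounded_linear.linear[OF F]] by (simp add: mult.left_commute)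
  then show "(\<integral>x. h x * F (s x) (c *\<^sub>R f x) \<partial>M) = c * (\<integral>x. h x * F (s x) (f x) \<partial>M)"
    by simp
next
  have ti: "\<And>f. f \<in> L1 M \<Longrightarrow> integrable M (\<lambda>x. h x * F (s x) (f x))"
    by (rule theta_int[where F=F and h=h and H=H and s=s and M=M]) (auto intro: cm s F Fb h hb)
  show "\<exists>K. \<forall>f\<in>L1 M. \<bar>\<integral>x. h x * F (s x) (f x) \<partial>M\<bar> \<le> K * L1norm M f"
  proof (intro exI[of _ "\<bar>H\<bar>"] ballI)
    fix f :: "'a \<Rightarrow> 'b" assume f: "f \<in> L1 M"
    have "\<bar>\<integral>x. h x * F (s x) (f x) \<partial>M\<bar> \<le> (\<integral>x. norm (h x * F (s x) (f x)) \<partial>M)"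
      using integral_norm_bound[of M "\<lambda>x. h x * F (s x) (f x)"] by simp
    also have "\<dots> \<le> (\<integral>x. \<bar>H\<bar> * norm (f x) \<partial>M)"
    proof (rule integral_mono)
      show "integrable M (\<lambda>x. norm (h x * F (s x) (f x)))" using ti[OF f] by simp
      show "integrable M (\<lambda>x. \<bar>H\<bar> * norm (f x))" using L1D(2)[OF cm f] by simp
      fix x assume x: "x \<in> space M"
      have "\<bar>h x\<bar> * \<bar>F (s x) (f x)\<bar> \<le> \<bar>H\<bar> * norm (f x)"
        using hb[OF x] Fb[of "s x" "f x"] abs_ge_self[of H]
        by (intro mult_mono) auto
      then show "norm (h x * F (s x) (f x)) \<le> \<bar>H\<bar> * norm (f x)"
        by (simp add: abs_mult)
    qed
    also have "\<dots> = \<bar>H\<bar> * L1norm M f" using L1D(4)[OF cm f] by simp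
    finally show "\<bar>\<integral>x. h x * F (s x) (f x) \<partial>M\<bar> \<le> \<bar>H\<bar> * L1norm M f" .
  qed
qed

lemma rwo_basic:
  fixes x :: "'a \<Rightarrow> 'b::real_normed_vector"
  assumes fin: "finite FV" and FV: "FV \<subseteq> L1_dual M" and r: "r > 0"
  shows "rel_weakly_open M {g \<in> L1_ball M. \<forall>\<phi>\<in>FV. \<bar>\<phi> g - \<phi> x\<bar> < r}"
  unfolding rel_weakly_open_def
proof (intro conjI ballI)
  show "{g \<in> L1_ball M. \<forall>\<phi>\<in>FV. \<bar>\<phi> g - \<phi> x\<bar> < r} \<subseteq> L1_ball M" by blast
next
  fix f assume f: "f \<in> {g \<in> L1_ball M. \<forall>\<phi>\<in>FV. \<bar>\<phi> g - \<phi> x\<bar> < r}"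
  define d where "d = Min (insert r ((\<lambda>\<phi>. r - \<bar>\<phi> f - \<phi> x\<bar>) ` FV))"
  have d0: "d > 0" unfolding d_def using fin r f by (subst Min_gr_iff) auto
  have dle: "d \<le> r - \<bar>\<phi> f - \<phi> x\<bar>" if "\<phi> \<in> FV" for \<phi>
    unfolding d_def using fin that by (intro Min_le) auto
  show "\<exists>F \<epsilon>. finite F \<and> F \<subseteq> L1_dual M \<and> \<epsilon> > 0 \<and>
        {g \<in> L1_ball M. \<forall>\<phi>\<in>F. \<bar>\<phi> g - \<phi> f\<bar> < \<epsilon>} \<subseteq> {g \<in> L1_ball M. \<forall>\<phi>\<in>FV. \<bar>\<phi> g - \<phi> x\<bar> < r}"
  proof (intro exI conjI)
    show "{g \<in> L1_ball M. \<forall>\<phi>\<in>FV. \<bar>\<phi> g - \<phi> f\<bar> < d} \<subseteq> {g \<in> L1_ball M. \<forall>\<phi>\<in>FV. \<bar>\<phi> g - \<phi> x\<bar> < r}"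
    proof safe
      fix g \<phi> assume "g \<in> L1_ball M" "\<forall>\<phi>\<in>FV. \<bar>\<phi> g - \<phi> f\<bar> < d" "\<phi> \<in> FV"
      then have "\<bar>\<phi> g - \<phi> f\<bar> < d" by blast
      then show "\<bar>\<phi> g - \<phi> x\<bar> < r" using dle[OF \<open>\<phi> \<in> FV\<close>] by linarith
    qed
  qed (use fin FV d0 in auto)
qed

lemma L1_simple_approx:
  fixes f :: "'a \<Rightarrow> 'b::real_normed_vector"
  assumes cm: "complete_measure M" and f: "f \<in> L1 M" and e: "e > 0"
  shows "\<exists>s. simple_function M s \<and> integrable M (\<lambda>x. norm (f x - s x)) \<and> (\<integral>x. norm (f x - s x) \<partial>M) < e"
proof -
  obtain t where t: "\<And>n. simple_function M (t n)" "AE x in M. (\<lambda>n. t n x) \<longlonglongrightarrow> f x"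
    using L1D(1)[OF cm f] unfolding strongly_measurable_def by blast
  define s where "s n x = (if norm (t n x) \<le> 2 * norm (f x) then t n x else 0)" for n x
  have nf: "(\<lambda>x. norm (f x)) \<in> borel_measurable M" by (rule L1D(3)[OF cm f])
  have s_simple: "simple_function M (s n)" for n
  proof (rule simple_function_borel_measurable)
    have "simple_function M (\<lambda>x. norm (t n x))"
      using simple_function_compose[OF t(1), of norm n] by (simp add: comp_def)
    then have "(\<lambda>x. norm (t n x)) \<in> borel_measurable M"
      by (rule borel_measurable_simple_function)
    then have "{x \<in> space M. norm (t n x) \<le> 2 * norm (f x)} \<in> sets M"
      using nf by measurable
    then show "s n \<in> borel_measurable M" unfolding s_def
      by (rule measurable_If[OF borel_measurable_simple_function[OF t(1)] borel_measurable_const])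
    have "s n ` space M \<subseteq> insert 0 (t n ` space M)" unfolding s_def by auto
    then show "finite (s n ` space M)"
      using simple_functionD(1)[OF t(1)] finite_subset by blast
  qed
  have sm: "strongly_measurable M (\<lambda>x. f x - s n x)" for n
    by (rule SM_comp2[OF L1D(1)[OF cm f] SM_simple[OF s_simple], where h="(-)"])
      (auto intro!: continuous_intros)
  have bnd: "norm (norm (f x - s n x)) \<le> 3 * norm (f x)" for n x
  proof -
    have "norm (s n x) \<le> 2 * norm (f x)" unfolding s_def by auto
    then show ?thesis using norm_triangle_ineq4[of "f x" "s n x"] by simp
  qed
  have lim: "AE x in M. (\<lambda>n. norm (f x - s n x)) \<longlonglongrightarrow> 0"
    using t(2)
  proof eventually_elim
    case (elim x)
    show ?case
    proof (cases "f x = 0")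
      case True
      then have "s n x = 0" for n unfolding s_def by auto
      then show ?thesis using True by simp
    next
      case False
      have "(\<lambda>n. norm (t n x)) \<longlonglongrightarrow> norm (f x)" using elim by (rule tendsto_norm)
      moreover have "norm (f x) < 2 * norm (f x)" using False by simp
      ultimately have "eventually (\<lambda>n. norm (t n x) < 2 * norm (f x)) sequentially"
        by (rule order_tendstoD)
      then have ev: "eventually (\<lambda>n. norm (f x - t n x) = norm (f x - s n x)) sequentially"
        by eventually_elim (simp add: s_def)
      have "(\<lambda>n. norm (f x - t n x)) \<longlonglongrightarrow> norm (f x - f x)"
        using elim by (intro tendsto_intros)
      then have "(\<lambda>n. norm (f x - t n x)) \<longlonglongrightarrow> 0" by simp
      then show ?thesis using ev by (rule Lim_transform_eventually)
    qed
  qed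
  have "(\<lambda>n. \<integral>x. norm (f x - s n x) \<partial>M) \<longlonglongrightarrow> (\<integral>x. 0 \<partial>M)"
  proof (rule integral_dominated_convergence[where w="\<lambda>x. 3 * norm (f x)"])
    show "(\<lambda>x. 0::real) \<in> borel_measurable M" by simp
    show "(\<lambda>x. norm (f x - s n x)) \<in> borel_measurable M" for n
      by (rule SM_measurable[OF cm SM_norm[OF sm]])
    show "integrable M (\<lambda>x. 3 * norm (f x))" using L1D(2)[OF cm f] by simp
    show "AE x in M. (\<lambda>n. norm (f x - s n x)) \<longlonglongrightarrow> 0" by (rule lim)
    show "AE x in M. norm (norm (f x - s n x)) \<le> 3 * norm (f x)" for n using bnd by simp
  qed
  then have "(\<lambda>n. \<integral>x. norm (f x - s n x) \<partial>M) \<longlonglongrightarrow> 0" by simp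
  then have "eventually (\<lambda>n. (\<integral>x. norm (f x - s n x) \<partial>M) < e) sequentially"
    using e by (rule order_tendstoD)
  then obtain N where "\<forall>n\<ge>N. (\<integral>x. norm (f x - s n x) \<partial>M) < e"
    unfolding eventually_sequentially by blast
  then have n: "(\<integral>x. norm (f x - s N x) \<partial>M) < e" by blast
  define n where "n = N"
  have n: "(\<integral>x. norm (f x - s n x) \<partial>M) < e" using n unfolding n_def .
  have "integrable M (\<lambda>x. norm (f x - s n x))"
  proof (rule Bochner_Integration.integrable_bound[where f="\<lambda>x. 3 * norm (f x)"])
    show "integrable M (\<lambda>x. 3 * norm (f x))" using L1D(2)[OF cm f] by simp
    show "(\<lambda>x. norm (f x - s n x)) \<in> borel_measurable M" by (rule SM_measurable[OF cm SM_norm[OF sm]])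
    show "AE x in M. norm (norm (f x - s n x)) \<le> norm (3 * norm (f x))" using bnd by simp
  qed
  then show ?thesis using n s_simple by blast
qed


lemma int_bmult:
  fixes f g :: "'a \<Rightarrow> real"
  assumes f: "integrable M f" and g: "g \<in> borel_measurable M" and gb: "\<And>x. x \<in> space M \<Longrightarrow> \<bar>g x\<bar> \<le> C"
  shows "integrable M (\<lambda>x. g x * f x)"
proof (rule Bochner_Integration.integrable_bound[where f="\<lambda>x. \<bar>C\<bar> * f x"])
  show "integrable M (\<lambda>x. \<bar>C\<bar> * f x)" using f by simp
  show "(\<lambda>x. g x * f x) \<in> borel_measurable M" using g borel_measurable_integrable[OF f] by measurable
  show "AE x in M. norm (g x * f x) \<le> norm (\<bar>C\<bar> * f x)"
  proof (rule AE_I2)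
    fix x assume x: "x \<in> space M"
    have "\<bar>g x\<bar> * \<bar>f x\<bar> \<le> \<bar>C\<bar> * \<bar>f x\<bar>" using gb[OF x] abs_ge_self[of C] by (intro mult_right_mono) auto
    then show "norm (g x * f x) \<le> norm (\<bar>C\<bar> * f x)" by (simp add: abs_mult)
  qed
qed

lemma arith_bound:
  fixes lam a :: "nat \<Rightarrow> real"
  assumes lam: "\<And>j. j < m \<Longrightarrow> lam j > 0" and s1: "(\<Sum>j<m. lam j) = 1"
    and a: "\<And>j. j < m \<Longrightarrow> a j \<ge> 1 - t" and Y: "Y = (\<Sum>j<m. lam j * a j)" and Y1: "Y \<le> 1"
    and t: "t \<ge> 0" and k: "k < m"
  shows "\<bar>a k - Y\<bar> \<le> t / lam k"
proof -
  have lk1: "lam k \<le> 1"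
    using s1 member_le_sum[of k "{..<m}" lam] lam k by (simp add: less_imp_le)
  have lk: "lam k > 0" using lam k by simp
  have "t * lam k \<le> t * 1" using lk1 t by (intro mult_left_mono) auto
  then have "t \<le> t / lam k" using lk by (simp add: le_divide_eq)
  then have 1: "Y - a k \<le> t / lam k" using a[OF k] Y1 by linarith
  have rem: "(\<Sum>j<m. lam j * a j) = lam k * a k + (\<Sum>j\<in>{..<m}-{k}. lam j * a j)"
    using k by (subst sum.remove[of _ k]) auto
  have reml: "(\<Sum>j<m. lam j) = lam k + (\<Sum>j\<in>{..<m}-{k}. lam j)"
    using k by (subst sum.remove[of _ k]) auto
  have "(\<Sum>j\<in>{..<m}-{k}. lam j * (1 - t)) \<le> (\<Sum>j\<in>{..<m}-{k}. lam j * a j)"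
    by (rule sum_mono) (use lam a in \<open>auto intro!: mult_left_mono simp: less_imp_le\<close>)
  moreover have "(\<Sum>j\<in>{..<m}-{k}. lam j * (1 - t)) = (1 - lam k) * (1 - t)"
    using reml s1 by (simp add: sum_distrib_right[symmetric])
  ultimately have "lam k * a k \<le> Y - (1 - lam k) * (1 - t)" using rem Y by linarith
  then have "lam k * (a k - Y) \<le> (1 - lam k) * (Y - 1 + t)" by (simp add: algebra_simps)
  also have "\<dots> \<le> (1 - lam k) * t" using lk1 Y1 by (intro mult_left_mono) auto
  also have "\<dots> \<le> t" using lk t by (simp add: mult_le_cancel_right1 algebra_simps)
  finally have "a k - Y \<le> t / lam k" using lk by (simp add: le_divide_eq mult.commute)
  then show ?thesis using 1 by linarith
qed


lemma construct:
  fixes lam a :: "nat \<Rightarrow> real" and h :: "nat \<Rightarrow> 'a \<Rightarrow> real" and ny :: "'a \<Rightarrow> real"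
  assumes lam: "\<And>j. j < m \<Longrightarrow> lam j > 0" and s1: "(\<Sum>j<m. lam j) = 1"
    and hm: "\<And>j. j < m \<Longrightarrow> h j \<in> borel_measurable M"
    and h0: "\<And>j x. j < m \<Longrightarrow> x \<in> space M \<Longrightarrow> 0 \<le> h j x"
    and hb: "\<And>j x. j < m \<Longrightarrow> x \<in> space M \<Longrightarrow> h j x \<le> 1 / lam j"
    and hs: "\<And>x. (\<Sum>j<m. lam j * h j x) = 1"
    and ny: "integrable M ny" and ny0: "\<And>x. x \<in> space M \<Longrightarrow> 0 \<le> ny x"
    and Y: "Y = integral\<^sup>L M ny" and Y1: "Y \<le> 1"
    and a: "\<And>j. j < m \<Longrightarrow> a j = (\<integral>x. h j x * ny x \<partial>M)" and apos: "\<And>j. j < m \<Longrightarrow> a j > 0"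
  shows "\<exists>g. (\<forall>x. (\<Sum>k<m. lam k * g k x) = 1) \<and> (\<forall>k<m. g k \<in> borel_measurable M \<and>
     (\<forall>x\<in>space M. 0 \<le> g k x \<and> g k x \<le> 2 / lam k) \<and>
     (\<integral>x. g k x * ny x \<partial>M) \<le> Y \<and> (\<integral>x. \<bar>g k x - h k x\<bar> * ny x \<partial>M) \<le> \<bar>a k - Y\<bar>)"
proof -
  define rho where "rho j = min 1 (Y / a j)" for j
  define D where "D = (\<Sum>j<m. lam j * max 0 (Y - a j))"
  define beta where "beta k = (if D = 0 then 0 else max 0 (Y - a k) / D)" for k
  define R where "R x = (\<Sum>j<m. lam j * h j x * (1 - rho j))" for x
  define g where "g k x = h k x * rho k + beta k * R x" for k x
  have Y0: "Y \<ge> 0" unfolding Y using ny0 by (intro integral_nonneg_AE) (auto intro: AE_I2)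
  have rho0: "0 \<le> rho j" if "j < m" for j
    unfolding rho_def using Y0 apos[OF that] by simp
  have rho1: "rho j \<le> 1" for j unfolding rho_def by simp
  have rhoa: "rho j * a j = min (a j) Y" if j: "j < m" for j
  proof (cases "Y \<le> a j")
    case True
    then have "Y / a j \<le> 1" using apos[OF j] by simp
    then show ?thesis using True apos[OF j] unfolding rho_def by (simp add: min_def)
  next
    case False
    then have "Y / a j \<ge> 1" using apos[OF j] by (simp add: le_divide_eq)
    then show ?thesis using False unfolding rho_def by (simp add: min_def)
  qed
  have D0: "D \<ge> 0" unfolding D_def using lam by (intro sum_nonneg) (simp add: less_imp_le)
  have habs: "\<bar>h j x\<bar> \<le> 1 / lam j" if "j < m" "x \<in> space M" for j x
    using h0[OF that] hb[OF that] by simp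
  have hint: "integrable M (\<lambda>x. h j x * ny x)" if "j < m" for j
    by (rule int_bmult[OF ny hm[OF that] habs[OF that]])
  have nym: "ny \<in> borel_measurable M" using ny by (rule borel_measurable_integrable)
  have sumA: "(\<Sum>j<m. lam j * a j) = Y"
  proof -
    have "(\<Sum>j<m. lam j * a j) = (\<Sum>j<m. (\<integral>x. lam j * (h j x * ny x) \<partial>M))"
      using a by (intro sum.cong) auto
    also have "\<dots> = (\<integral>x. (\<Sum>j<m. lam j * (h j x * ny x)) \<partial>M)"
      by (rule Bochner_Integration.integral_sum[symmetric]) (use hint in auto)
    also have "\<dots> = (\<integral>x. ny x \<partial>M)"
    proof (rule Bochner_Integration.integral_cong[OF refl])
      fix x
      have "(\<Sum>j<m. lam j * (h j x * ny x)) = (\<Sum>j<m. lam j * h j x) * ny x"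
        by (simp add: sum_distrib_right mult.assoc)
      then show "(\<Sum>j<m. lam j * (h j x * ny x)) = ny x" using hs[of x] by simp
    qed
    finally show ?thesis using Y by simp
  qed
  have PD: "(\<Sum>j<m. lam j * max 0 (a j - Y)) = D"
  proof -
    have "(\<Sum>j<m. lam j * max 0 (a j - Y)) - D = (\<Sum>j<m. lam j * (a j - Y))"
      unfolding D_def sum_subtractf[symmetric]
      by (intro sum.cong) (auto simp: max_def algebra_simps)
    also have "\<dots> = (\<Sum>j<m. lam j * a j) - (\<Sum>j<m. lam j) * Y"
      by (simp add: right_diff_distrib sum_subtractf sum_distrib_right)
    also have "\<dots> = 0" using sumA s1 by simp
    finally show ?thesis by simp
  qed
  have R0: "0 \<le> R x" if "x \<in> space M" for x
    unfolding R_def using lam h0 that rho1 by (intro sum_nonneg) (auto simp: less_imp_le)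
  have R1: "R x \<le> 1" if "x \<in> space M" for x
  proof -
    have "R x \<le> (\<Sum>j<m. lam j * h j x)" unfolding R_def
    proof (rule sum_mono)
      fix j assume j: "j \<in> {..<m}"
      have "0 \<le> lam j * h j x" using lam[of j] h0[of j x] j that by simp
      then show "lam j * h j x * (1 - rho j) \<le> lam j * h j x"
        using rho0[of j] j by (simp add: mult_left_le)
    qed
    then show ?thesis using hs[of x] by simp
  qed
  have Rm: "R \<in> borel_measurable M"
    unfolding R_def by (intro borel_measurable_sum) (use hm in auto)
  have Rint: "integrable M (\<lambda>x. R x * ny x)"
    by (rule int_bmult[OF ny Rm, of 1]) (use R0 R1 in auto)
  have intR: "(\<integral>x. R x * ny x \<partial>M) = D"
  proof -
    have "(\<integral>x. R x * ny x \<partial>M) = (\<integral>x. (\<Sum>j<m. (lam j * (1 - rho j)) * (h j x * ny x)) \<partial>M)"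
      unfolding R_def by (intro Bochner_Integration.integral_cong) (auto simp: sum_distrib_right sum_distrib_left ac_simps)
    also have "\<dots> = (\<Sum>j<m. (\<integral>x. (lam j * (1 - rho j)) * (h j x * ny x) \<partial>M))"
      by (rule Bochner_Integration.integral_sum) (use hint in auto)
    also have "\<dots> = (\<Sum>j<m. lam j * max 0 (a j - Y))"
    proof (rule sum.cong[OF refl])
      fix j assume j: "j \<in> {..<m}"
      have "(\<integral>x. (lam j * (1 - rho j)) * (h j x * ny x) \<partial>M) = lam j * ((1 - rho j) * a j)"
        using a[of j] j by simp
      also have "(1 - rho j) * a j = max 0 (a j - Y)"
        using rhoa[of j] j by (simp add: left_diff_distrib max_def min_def)
      finally show "(\<integral>x. (lam j * (1 - rho j)) * (h j x * ny x) \<partial>M) = lam j * max 0 (a j - Y)" .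
    qed
    finally show ?thesis using PD by simp
  qed
  have beta0: "0 \<le> beta k" for k unfolding beta_def using D0 by auto
  have betas: "(\<Sum>k<m. lam k * beta k) = (if D = 0 then 0 else 1)"
  proof (cases "D = 0")
    case True then show ?thesis unfolding beta_def by simp
  next
    case False
    have "(\<Sum>k<m. lam k * beta k) = (\<Sum>k<m. lam k * max 0 (Y - a k)) / D"
      unfolding beta_def using False by (simp add: sum_divide_distrib)
    then show ?thesis using False unfolding D_def by simp
  qed
  have betab: "beta k \<le> 1 / lam k" if k: "k < m" for k
  proof -
    have "lam k * beta k \<le> (\<Sum>k<m. lam k * beta k)"
      using k lam beta0 by (intro member_le_sum) (auto simp: less_imp_le)
    also have "\<dots> \<le> 1" using betas by simp
    finally show ?thesis using lam[OF k] by (simp add: le_divide_eq mult.commute)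
  qed
  have Dzero: "rho j = 1" if "D = 0" "j < m" for j
  proof -
    have "\<forall>i\<in>{..<m}. lam i * max 0 (Y - a i) = 0"
      using sum_nonneg_eq_0_iff[of "{..<m}" "\<lambda>i. lam i * max 0 (Y - a i)"] that(1) lam
      unfolding D_def by (simp add: less_imp_le)
    then have ge: "a i \<ge> Y" if "i < m" for i
    proof -
      have "lam i * max 0 (Y - a i) = 0" using \<open>\<forall>i\<in>{..<m}. _\<close> that by blast
      then have "max 0 (Y - a i) = 0" using lam[OF that] by simp
      then show ?thesis by linarith
    qed
    have "(\<Sum>i<m. lam i * (a i - Y)) = (\<Sum>i<m. lam i * a i) - (\<Sum>i<m. lam i) * Y"
      by (simp add: right_diff_distrib sum_subtractf sum_distrib_right)
    also have "\<dots> = 0" using sumA s1 by simp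
    finally have "\<forall>i\<in>{..<m}. lam i * (a i - Y) = 0"
      using sum_nonneg_eq_0_iff[of "{..<m}" "\<lambda>i. lam i * (a i - Y)"] lam ge by (simp add: less_imp_le)
    then have "lam j = 0 \<or> a j = Y" using that(2) by simp
    then have "a j = Y" using lam[OF that(2)] by simp
    then show ?thesis unfolding rho_def using apos[OF that(2)] by simp
  qed
  have gsum: "(\<Sum>k<m. lam k * g k x) = 1" for x
  proof -
    have "(\<Sum>k<m. lam k * g k x) = (\<Sum>k<m. lam k * h k x * rho k) + (\<Sum>k<m. lam k * beta k) * R x"
      unfolding g_def by (simp add: sum.distrib distrib_left sum_distrib_right sum_distrib_left ac_simps)
    also have "\<dots> = 1"
    proof (cases "D = 0")
      case True
      then show ?thesis using Dzero[OF True] hs[of x] betas by simp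
    next
      case False
      have "(\<Sum>k<m. lam k * h k x * rho k) + R x = (\<Sum>k<m. lam k * h k x)"
        unfolding R_def sum.distrib[symmetric] by (intro sum.cong) (auto simp: algebra_simps)
      then show ?thesis using False betas hs[of x] by simp
    qed
    finally show ?thesis .
  qed
  have gm: "g k \<in> borel_measurable M" if "k < m" for k
    unfolding g_def using hm[OF that] Rm by measurable
  have g0: "0 \<le> g k x" if "k < m" "x \<in> space M" for k x
    unfolding g_def using h0[OF that] rho0[OF that(1)] beta0[of k] R0[OF that(2)] by simp
  have gb: "g k x \<le> 2 / lam k" if "k < m" "x \<in> space M" for k x
  proof -
    have "h k x * rho k \<le> 1 / lam k"
      using h0[OF that] hb[OF that] rho1[of k] rho0[OF that(1)] lam[OF that(1)] mult_mono[of "h k x" "1/lam k" "rho k" 1] by simp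
    moreover have "beta k * R x \<le> 1 / lam k"
      using betab[OF that(1)] R1[OF that(2)] R0[OF that(2)] beta0[of k] lam[OF that(1)] mult_mono[of "beta k" "1/lam k" "R x" 1] by simp
    ultimately show ?thesis unfolding g_def by simp
  qed
  have gabs: "\<bar>g k x\<bar> \<le> 2 / lam k" if "k < m" "x \<in> space M" for k x
    using g0[OF that] gb[OF that] by simp
  have intg: "(\<integral>x. g k x * ny x \<partial>M) = rho k * a k + beta k * D" if k: "k < m" for k
  proof -
    have "(\<integral>x. g k x * ny x \<partial>M) = (\<integral>x. rho k * (h k x * ny x) + beta k * (R x * ny x) \<partial>M)"
      unfolding g_def by (intro Bochner_Integration.integral_cong) (auto simp: algebra_simps)
    also have "\<dots> = rho k * a k + beta k * D"
      using Bochner_Integration.integral_add[OF integrable_mult_right[OF hint[OF k], of "rho k"] integrable_mult_right[OF Rint, of "beta k"]]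
        a[OF k] intR by simp
    finally show ?thesis .
  qed
  have betaD: "beta k * D \<le> max 0 (Y - a k)" for k
    unfolding beta_def by auto
  have gY: "(\<integral>x. g k x * ny x \<partial>M) \<le> Y" if k: "k < m" for k
    using intg[OF k] rhoa[OF k] betaD[of k] by (auto simp: min_def max_def)
  have gdiff: "(\<integral>x. \<bar>g k x - h k x\<bar> * ny x \<partial>M) \<le> \<bar>a k - Y\<bar>" if k: "k < m" for k
  proof -
    have dm: "(\<lambda>x. \<bar>g k x - h k x\<bar>) \<in> borel_measurable M" using gm[OF k] hm[OF k] by measurable
    have "(\<integral>x. \<bar>g k x - h k x\<bar> * ny x \<partial>M) \<le> (\<integral>x. beta k * (R x * ny x) + (1 - rho k) * (h k x * ny x) \<partial>M)"
    proof (rule integral_mono)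
      have "\<bar>\<bar>g k x - h k x\<bar>\<bar> \<le> 2 / lam k + 1 / lam k" if x: "x \<in> space M" for x
      proof -
        have "\<bar>g k x - h k x\<bar> \<le> \<bar>g k x\<bar> + \<bar>h k x\<bar>" by (rule abs_triangle_ineq4)
        also have "\<dots> \<le> 2 / lam k + 1 / lam k" by (rule add_mono[OF gabs[OF k x] habs[OF k x]])
        finally show ?thesis by simp
      qed
      then show "integrable M (\<lambda>x. \<bar>g k x - h k x\<bar> * ny x)"
        by (rule int_bmult[OF ny dm])
      show "integrable M (\<lambda>x. beta k * (R x * ny x) + (1 - rho k) * (h k x * ny x))"
        using Rint hint[OF k] by simp
      fix x assume x: "x \<in> space M"
      have "g k x - h k x = beta k * R x - (1 - rho k) * h k x" unfolding g_def by (simp add: algebra_simps)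
      moreover have "0 \<le> beta k * R x" using beta0[of k] R0[OF x] by simp
      moreover have "0 \<le> (1 - rho k) * h k x" using rho1[of k] h0[OF k x] by simp
      ultimately have "\<bar>g k x - h k x\<bar> \<le> beta k * R x + (1 - rho k) * h k x" by linarith
      then have "\<bar>g k x - h k x\<bar> * ny x \<le> (beta k * R x + (1 - rho k) * h k x) * ny x"
        using ny0[OF x] by (rule mult_right_mono)
      then show "\<bar>g k x - h k x\<bar> * ny x \<le> beta k * (R x * ny x) + (1 - rho k) * (h k x * ny x)"
        by (simp add: algebra_simps)
    qed
    also have "\<dots> = beta k * D + (1 - rho k) * a k"
      using Bochner_Integration.integral_add[OF integrable_mult_right[OF Rint, of "beta k"] integrable_mult_right[OF hint[OF k], of "1 - rho k"]]
        a[OF k] intR by simp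
    also have "\<dots> \<le> \<bar>a k - Y\<bar>"
      using betaD[of k] rhoa[OF k] by (auto simp: left_diff_distrib min_def max_def)
    finally show ?thesis .
  qed
  show ?thesis
    by (rule exI[of _ g]) (use gsum gm g0 gb gY gdiff in auto)
qed


lemma wsum:
  fixes lam :: "nat \<Rightarrow> real" and h :: "nat \<Rightarrow> 'a \<Rightarrow> real" and ny :: "'a \<Rightarrow> real"
  assumes hint: "\<And>j. j < m \<Longrightarrow> integrable M (\<lambda>x. h j x * ny x)"
    and hs: "\<And>x. (\<Sum>j<m. lam j * h j x) = 1"
  shows "(\<Sum>j<m. lam j * (\<integral>x. h j x * ny x \<partial>M)) = (\<integral>x. ny x \<partial>M)"
proof -
  have "(\<Sum>j<m. lam j * (\<integral>x. h j x * ny x \<partial>M)) = (\<Sum>j<m. (\<integral>x. lam j * (h j x * ny x) \<partial>M))"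
    by simp
  also have "\<dots> = (\<integral>x. (\<Sum>j<m. lam j * (h j x * ny x)) \<partial>M)"
    by (rule Bochner_Integration.integral_sum[symmetric]) (use hint in auto)
  also have "\<dots> = (\<integral>x. ny x \<partial>M)"
  proof (rule Bochner_Integration.integral_cong[OF refl])
    fix x
    have "(\<Sum>j<m. lam j * (h j x * ny x)) = (\<Sum>j<m. lam j * h j x) * ny x"
      by (simp add: sum_distrib_right mult.assoc)
    then show "(\<Sum>j<m. lam j * (h j x * ny x)) = ny x" using hs[of x] by simp
  qed
  finally show ?thesis .
qed


lemma main_step:
  fixes M :: "'a measure" and u :: "nat \<Rightarrow> 'a \<Rightarrow> 'b::banach"
  assumes cm: "complete_measure M" and wur: "wUR TYPE('b)"
    and m: "m \<ge> 1" and lam: "\<And>k. k < m \<Longrightarrow> lam k > 0" and s1: "(\<Sum>k<m. lam k) = 1"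
    and U: "\<And>k. k < m \<Longrightarrow> rel_weakly_open M (U k)" and u: "\<And>k. k < m \<Longrightarrow> u k \<in> U k"
    and xdef: "x = (\<lambda>\<omega>. \<Sum>k<m. lam k *\<^sub>R u k \<omega>)" and x1: "L1norm M x = 1"
  shows "\<exists>V. rel_weakly_open M V \<and> x \<in> V \<and> V \<subseteq> {(\<lambda>\<omega>. \<Sum>k<m. lam k *\<^sub>R v k \<omega>) | v. \<forall>k<m. v k \<in> U k}"
proof -
  have lk1: "lam k \<le> 1" if k: "k < m" for k
    using s1 member_le_sum[of k "{..<m}" lam] lam k by (simp add: less_imp_le)
  have uB: "u k \<in> L1_ball M" if "k < m" for k
    using U[OF that] u[OF that] unfolding rel_weakly_open_def by blast
  have uL1: "u k \<in> L1 M" and un: "L1norm M (u k) \<le> 1" if "k < m" for k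
    using uB[OF that] unfolding L1_ball_def by auto
  have xL1: "x \<in> L1 M"
    unfolding xdef
  proof (rule L1_sum[OF cm])
    fix k assume k: "k < m"
    show "(\<lambda>\<omega>. lam k *\<^sub>R u k \<omega>) \<in> L1 M"
      by (rule L1_mult[OF cm uL1[OF k] borel_measurable_const, of _ "\<bar>lam k\<bar>"]) simp
  qed
  have nxi: "integrable M (\<lambda>\<omega>. norm (x \<omega>))" and nx1: "(\<integral>\<omega>. norm (x \<omega>) \<partial>M) = 1"
    using L1D[OF cm xL1] x1 by auto
  have nxm: "(\<lambda>\<omega>. norm (x \<omega>)) \<in> borel_measurable M" using L1D(3)[OF cm xL1] .
  have nui: "integrable M (\<lambda>\<omega>. norm (u k \<omega>))" and nu1: "(\<integral>\<omega>. norm (u k \<omega>) \<partial>M) \<le> 1"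
    and num: "(\<lambda>\<omega>. norm (u k \<omega>)) \<in> borel_measurable M" if k: "k < m" for k
    using L1D[OF cm uL1[OF k]] un[OF k] by auto
  define S where "S \<omega> = (\<Sum>k<m. lam k * norm (u k \<omega>))" for \<omega>
  have Sm: "S \<in> borel_measurable M"
    unfolding S_def by (intro borel_measurable_sum) (use num in auto)
  have Si: "integrable M S" unfolding S_def by (rule Bochner_Integration.integrable_sum) (auto intro: integrable_mult_right nui)
  have intS: "(\<integral>\<omega>. S \<omega> \<partial>M) = (\<Sum>k<m. lam k * (\<integral>\<omega>. norm (u k \<omega>) \<partial>M))"
    unfolding S_def by (subst Bochner_Integration.integral_sum) (auto intro: nui)
  have S1: "(\<integral>\<omega>. S \<omega> \<partial>M) \<le> 1"
  proof -
    have "(\<Sum>k<m. lam k * (\<integral>\<omega>. norm (u k \<omega>) \<partial>M)) \<le> (\<Sum>k<m. lam k * 1)"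
      by (rule sum_mono) (use lam nu1 in \<open>auto intro!: mult_left_mono simp: less_imp_le\<close>)
    then show ?thesis using intS s1 by simp
  qed
  have nxS: "norm (x \<omega>) \<le> S \<omega>" for \<omega>
  proof -
    have "norm (x \<omega>) \<le> (\<Sum>k<m. norm (lam k *\<^sub>R u k \<omega>))" unfolding xdef by (rule norm_sum)
    also have "\<dots> = S \<omega>" unfolding S_def using lam by (intro sum.cong) (auto simp: less_imp_le)
    finally show ?thesis .
  qed
  have "(\<integral>\<omega>. S \<omega> - norm (x \<omega>) \<partial>M) = (\<integral>\<omega>. S \<omega> \<partial>M) - 1"
    using Bochner_Integration.integral_diff[OF Si nxi] nx1 by simp
  moreover have "(\<integral>\<omega>. S \<omega> - norm (x \<omega>) \<partial>M) \<ge> 0"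
    using nxS by (intro integral_nonneg_AE) (auto intro: AE_I2 simp: le_diff_eq)
  ultimately have int0: "(\<integral>\<omega>. S \<omega> - norm (x \<omega>) \<partial>M) = 0" and intS1: "(\<integral>\<omega>. S \<omega> \<partial>M) = 1"
    using S1 by auto
  have "AE \<omega> in M. S \<omega> - norm (x \<omega>) = 0"
    using integral_nonneg_eq_0_iff_AE[of M "\<lambda>\<omega>. S \<omega> - norm (x \<omega>)"] int0 Si nxi nxS
    by (simp add: le_diff_eq)
  then have AEeq: "AE \<omega> in M. norm (x \<omega>) = S \<omega>" by (rule AE_mp) (intro AE_I2, simp)
  have nu_eq: "(\<integral>\<omega>. norm (u k \<omega>) \<partial>M) = 1" if k: "k < m" for k
  proof -
    have "(\<Sum>j<m. lam j * (1 - (\<integral>\<omega>. norm (u j \<omega>) \<partial>M))) = (\<Sum>j<m. lam j) - (\<integral>\<omega>. S \<omega> \<partial>M)"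
      unfolding intS by (simp add: right_diff_distrib sum_subtractf)
    also have "\<dots> = 0" using s1 intS1 by simp
    finally have "\<forall>j\<in>{..<m}. lam j * (1 - (\<integral>\<omega>. norm (u j \<omega>) \<partial>M)) = 0"
      using sum_nonneg_eq_0_iff[of "{..<m}" "\<lambda>j. lam j * (1 - (\<integral>\<omega>. norm (u j \<omega>) \<partial>M))"] lam nu1
      by (simp add: less_imp_le)
    then have "lam k * (1 - (\<integral>\<omega>. norm (u k \<omega>) \<partial>M)) = 0" using k by blast
    then show ?thesis using lam[OF k] by simp
  qed
  define h where "h k \<omega> = (if S \<omega> = 0 then 1 else norm (u k \<omega>) / S \<omega>)" for k \<omega>
  have hm: "h k \<in> borel_measurable M" if k: "k < m" for k
    unfolding h_def using Sm num[OF k] by measurable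
  have S0: "0 \<le> S \<omega>" for \<omega> using nxS[of \<omega>] norm_ge_zero[of "x \<omega>"] by linarith
  have lS: "lam k * norm (u k \<omega>) \<le> S \<omega>" if k: "k < m" for k \<omega>
    unfolding S_def using k lam by (intro member_le_sum) (auto simp: less_imp_le)
  have h0: "0 \<le> h k \<omega>" for k \<omega> unfolding h_def using S0[of \<omega>] by simp
  have hb: "h k \<omega> \<le> 1 / lam k" if k: "k < m" for k \<omega>
  proof (cases "S \<omega> = 0")
    case True then show ?thesis unfolding h_def using lk1[OF k] lam[OF k] by (simp add: le_divide_eq)
  next
    case False
    then have Sp: "S \<omega> > 0" using S0[of \<omega>] by simp
    have "norm (u k \<omega>) \<le> S \<omega> / lam k" using lS[OF k, of \<omega>] lam[OF k] by (simp add: le_divide_eq mult.commute)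
    then have "norm (u k \<omega>) / S \<omega> \<le> (S \<omega> / lam k) / S \<omega>" using Sp by (intro divide_right_mono) auto
    also have "\<dots> = 1 / lam k" using Sp by simp
    finally show ?thesis unfolding h_def using False by simp
  qed
  have habs: "\<bar>h k \<omega>\<bar> \<le> 1 / lam k" if k: "k < m" for k \<omega> using h0[of k \<omega>] hb[OF k] by simp
  have hs: "(\<Sum>k<m. lam k * h k \<omega>) = 1" for \<omega>
  proof (cases "S \<omega> = 0")
    case True then show ?thesis unfolding h_def using s1 by simp
  next
    case False
    have "(\<Sum>k<m. lam k * h k \<omega>) = (\<Sum>k<m. lam k * norm (u k \<omega>)) / S \<omega>"
      unfolding h_def using False by (simp add: sum_divide_distrib)
    then show ?thesis using False unfolding S_def by simp
  qed
  have par: "AE \<omega> in M. \<forall>k<m. u k \<omega> = h k \<omega> *\<^sub>R x \<omega>"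
    using AEeq
  proof (rule AE_mp, intro AE_I2 impI allI)
    fix \<omega> k assume eq: "norm (x \<omega>) = S \<omega>" and k: "k < m"
    show "u k \<omega> = h k \<omega> *\<^sub>R x \<omega>"
    proof (cases "S \<omega> = 0")
      case True
      have "\<forall>j\<in>{..<m}. lam j * norm (u j \<omega>) = 0"
        using sum_nonneg_eq_0_iff[of "{..<m}" "\<lambda>j. lam j * norm (u j \<omega>)"] True lam
        unfolding S_def by (simp add: less_imp_le)
      then have "lam k * norm (u k \<omega>) = 0" using k by blast
      then have "u k \<omega> = 0" using lam[OF k] by simp
      moreover have "x \<omega> = 0" using eq True by simp
      ultimately show ?thesis by simp
    next
      case False
      have "u k \<omega> = (norm (u k \<omega>) / (\<Sum>j<m. lam j * norm (u j \<omega>))) *\<^sub>R (\<Sum>j<m. lam j *\<^sub>R u j \<omega>)"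
      proof (rule wUR_parallel[OF wur lam])
        show "norm (\<Sum>k<m. lam k *\<^sub>R u k \<omega>) = (\<Sum>k<m. lam k * norm (u k \<omega>))"
          using eq unfolding xdef S_def by simp
        show "(\<Sum>k<m. lam k * norm (u k \<omega>)) \<noteq> 0" using False unfolding S_def by simp
      qed (use k in auto)
      then show ?thesis unfolding h_def xdef S_def[symmetric] using False by simp
    qed
  qed
  have hxn: "AE \<omega> in M. h k \<omega> * norm (x \<omega>) = norm (u k \<omega>)" if k: "k < m" for k
    using par by (rule AE_mp) (intro AE_I2 impI, use k h0 in auto)
  have hxint: "integrable M (\<lambda>\<omega>. h k \<omega> * norm (x \<omega>))" if k: "k < m" for k
    by (rule int_bmult[OF nxi hm[OF k] habs[OF k]])
  have hx1: "(\<integral>\<omega>. h k \<omega> * norm (x \<omega>) \<partial>M) = 1" if k: "k < m" for k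
  proof -
    have "(\<integral>\<omega>. h k \<omega> * norm (x \<omega>) \<partial>M) = (\<integral>\<omega>. norm (u k \<omega>) \<partial>M)"
      by (rule integral_cong_AE[OF _ num[OF k] hxn[OF k]]) (use hm[OF k] nxm in measurable)
    then show ?thesis using nu_eq[OF k] by simp
  qed
  have hxL1: "(\<lambda>\<omega>. h k \<omega> *\<^sub>R x \<omega>) \<in> L1 M" if k: "k < m" for k
    by (rule L1_mult[OF cm xL1 hm[OF k] habs[OF k]])
  have ueq: "\<phi> (u k) = \<phi> (\<lambda>\<omega>. h k \<omega> *\<^sub>R x \<omega>)" if k: "k < m" and \<phi>: "\<phi> \<in> L1_dual M" for k \<phi>
    by (rule dual_AE[OF cm \<phi> uL1[OF k] hxL1[OF k]]) (use par k in auto)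

  have ex: "\<forall>k. \<exists>Fe. k < m \<longrightarrow> (finite (fst Fe) \<and> fst Fe \<subseteq> L1_dual M \<and> snd Fe > 0 \<and>
        {g \<in> L1_ball M. \<forall>\<phi>\<in>fst Fe. \<bar>\<phi> g - \<phi> (u k)\<bar> < snd Fe} \<subseteq> U k)"
  proof
    fix k
    show "\<exists>Fe. k < m \<longrightarrow> (finite (fst Fe) \<and> fst Fe \<subseteq> L1_dual M \<and> snd Fe > 0 \<and>
        {g \<in> L1_ball M. \<forall>\<phi>\<in>fst Fe. \<bar>\<phi> g - \<phi> (u k)\<bar> < snd Fe} \<subseteq> U k)"
    proof (cases "k < m")
      case True
      then obtain F \<epsilon> where "finite F \<and> F \<subseteq> L1_dual M \<and> \<epsilon> > 0 \<and>
        {g \<in> L1_ball M. \<forall>\<phi>\<in>F. \<bar>\<phi> g - \<phi> (u k)\<bar> < \<epsilon>} \<subseteq> U k"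
        using U[OF True] u[OF True] unfolding rel_weakly_open_def by blast
      then show ?thesis by (intro exI[of _ "(F, \<epsilon>)"]) simp
    qed simp
  qed
  obtain Fe where Fe: "\<And>k. k < m \<Longrightarrow> finite (fst (Fe k)) \<and> fst (Fe k) \<subseteq> L1_dual M \<and> snd (Fe k) > 0 \<and>
        {g \<in> L1_ball M. \<forall>\<phi>\<in>fst (Fe k). \<bar>\<phi> g - \<phi> (u k)\<bar> < snd (Fe k)} \<subseteq> U k"
    using choice[OF ex] by blast
  define Fk where "Fk k = fst (Fe k)" for k
  define ek where "ek k = snd (Fe k)" for k
  have Fkfin: "finite (Fk k)" and Fkd: "Fk k \<subseteq> L1_dual M" and ek0: "ek k > 0"
    and Fksub: "{g \<in> L1_ball M. \<forall>\<phi>\<in>Fk k. \<bar>\<phi> g - \<phi> (u k)\<bar> < ek k} \<subseteq> U k" if "k < m" for k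
    using Fe[OF that] unfolding Fk_def ek_def by auto
  define e where "e = Min (ek ` {..<m})"
  have "0 \<in> {..<m}" using m by simp
  then have mne: "{..<m} \<noteq> {}" by blast
  have e0: "e > 0" unfolding e_def using mne ek0 by (subst Min_gr_iff) auto
  have eek: "e \<le> ek k" if "k < m" for k unfolding e_def using that by (intro Min_le) auto
  define FF where "FF = (\<Union>k<m. Fk k)"
  have FFfin: "finite FF" unfolding FF_def using Fkfin by auto
  have FFd: "FF \<subseteq> L1_dual M" unfolding FF_def using Fkd by auto
  define Kf where "Kf \<phi> = (SOME K. K \<ge> 0 \<and> (\<forall>f\<in>L1 M. \<bar>\<phi> f\<bar> \<le> K * L1norm M f))" for \<phi> :: "('a \<Rightarrow> 'b) \<Rightarrow> real"
  have Kf: "Kf \<phi> \<ge> 0 \<and> (\<forall>f\<in>L1 M. \<bar>\<phi> f\<bar> \<le> Kf \<phi> * L1norm M f)" if "\<phi> \<in> L1_dual M" for \<phi>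
    unfolding Kf_def by (rule someI_ex) (rule dualD(3)[OF that])
  define B where "B = 1 + (\<Sum>\<phi>\<in>FF. Kf \<phi>)"
  have B0: "B > 0" unfolding B_def using Kf FFd by (smt (verit) subsetD sum_nonneg)
  have Bb: "\<bar>\<phi> f\<bar> \<le> B * L1norm M f" if "\<phi> \<in> FF" "f \<in> L1 M" for \<phi> f
  proof -
    have "Kf \<phi> \<le> (\<Sum>\<phi>\<in>FF. Kf \<phi>)" using that FFfin Kf FFd by (intro member_le_sum) auto
    then have "Kf \<phi> \<le> B" unfolding B_def by simp
    then have "Kf \<phi> * L1norm M f \<le> B * L1norm M f"
      using L1norm_nonneg[OF cm that(2)] by (rule mult_right_mono)
    moreover have "\<phi> \<in> L1_dual M" using FFd that(1) by blast
    then have "\<bar>\<phi> f\<bar> \<le> Kf \<phi> * L1norm M f" using Kf that(2) by blast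
    ultimately show ?thesis by linarith
  qed
  define lmin where "lmin = Min (lam ` {..<m})"
  have lmin0: "lmin > 0" unfolding lmin_def using mne lam by (subst Min_gr_iff) auto
  have lminl: "lmin \<le> lam k" if "k < m" for k unfolding lmin_def using that by (intro Min_le) auto
  have lmin1: "lmin \<le> 1" using lminl[of 0] lk1[of 0] m by simp
  define eta where "eta = min (lmin / 6) (e * lmin^2 / (12 * B))"
  have eta0: "eta > 0" unfolding eta_def using lmin0 e0 B0 by simp
  obtain s where s: "simple_function M s" "integrable M (\<lambda>\<omega>. norm (x \<omega> - s \<omega>))"
    "(\<integral>\<omega>. norm (x \<omega> - s \<omega>) \<partial>M) < eta"
    using L1_simple_approx[OF cm xL1 eta0] by blast
  have "\<forall>c::'b. \<exists>f. bounded_linear f \<and> (\<forall>w. \<bar>f w\<bar> \<le> norm w) \<and> f c = norm c"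
    using hahn_banach_norming by blast
  then have "\<exists>F. \<forall>c::'b. bounded_linear (F c) \<and> (\<forall>w. \<bar>F c w\<bar> \<le> norm w) \<and> F c c = norm c"
    by (rule choice)
  then obtain F where Fall: "\<forall>c::'b. bounded_linear (F c) \<and> (\<forall>w. \<bar>F c w\<bar> \<le> norm w) \<and> F c c = norm c"
    by (rule exE)
  have F: "\<And>c. bounded_linear (F c)" "\<And>c w. \<bar>F c w\<bar> \<le> norm w" "\<And>c. F c c = norm c"
    using Fall by blast+
  define Th where "Th k = (\<lambda>f::'a \<Rightarrow> 'b. \<integral>\<omega>. h k \<omega> * F (s \<omega>) (f \<omega>) \<partial>M)" for k
  have Thd: "Th k \<in> L1_dual M" if k: "k < m" for k
    unfolding Th_def by (rule dual_theta[OF cm s(1) F(1) F(2) hm[OF k] habs[OF k]])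
  have Thint: "integrable M (\<lambda>\<omega>. h k \<omega> * F (s \<omega>) (f \<omega>))" if k: "k < m" and f: "f \<in> L1 M" for k f
    by (rule theta_int[where F=F and h="h k" and H="1 / lam k" and s=s and M=M]) (auto intro: cm s F hm[OF k] habs[OF k] f)
  have Thx: "Th k x \<ge> 1 - 2 * eta / lam k" if k: "k < m" for k
  proof -
    have "(\<integral>\<omega>. h k \<omega> * norm (x \<omega>) - (2 / lam k) * norm (x \<omega> - s \<omega>) \<partial>M) \<le> Th k x"
      unfolding Th_def
    proof (rule integral_mono)
      show "integrable M (\<lambda>\<omega>. h k \<omega> * norm (x \<omega>) - (2 / lam k) * norm (x \<omega> - s \<omega>))"
        using hxint[OF k] s(2) by simp
      show "integrable M (\<lambda>\<omega>. h k \<omega> * F (s \<omega>) (x \<omega>))" by (rule Thint[OF k xL1])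
      fix \<omega>
      have lin: "F (s \<omega>) (x \<omega>) = F (s \<omega>) (s \<omega>) + F (s \<omega>) (x \<omega> - s \<omega>)"
        using linear_add[OF bounded_linear.linear[OF F(1)], of "s \<omega>" "s \<omega>" "x \<omega> - s \<omega>"] by simp
      have "F (s \<omega>) (x \<omega> - s \<omega>) \<ge> - norm (x \<omega> - s \<omega>)" using F(2)[of "s \<omega>" "x \<omega> - s \<omega>"] by linarith
      moreover have "norm (s \<omega>) \<ge> norm (x \<omega>) - norm (x \<omega> - s \<omega>)"
        using norm_triangle_ineq2[of "x \<omega>" "s \<omega>"] norm_minus_commute[of "x \<omega>" "s \<omega>"] by linarith
      ultimately have Fx: "F (s \<omega>) (x \<omega>) \<ge> norm (x \<omega>) - 2 * norm (x \<omega> - s \<omega>)" using lin F(3)[of "s \<omega>"] by linarith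
      have "h k \<omega> * (norm (x \<omega>) - 2 * norm (x \<omega> - s \<omega>)) \<le> h k \<omega> * F (s \<omega>) (x \<omega>)"
        using Fx h0[of k \<omega>] by (rule mult_left_mono)
      moreover have "h k \<omega> * (2 * norm (x \<omega> - s \<omega>)) \<le> (1 / lam k) * (2 * norm (x \<omega> - s \<omega>))"
        using hb[OF k, of \<omega>] by (rule mult_right_mono) simp
      ultimately show "h k \<omega> * norm (x \<omega>) - (2 / lam k) * norm (x \<omega> - s \<omega>) \<le> h k \<omega> * F (s \<omega>) (x \<omega>)"
        by (simp add: right_diff_distrib)
    qed
    moreover have "(\<integral>\<omega>. h k \<omega> * norm (x \<omega>) - (2 / lam k) * norm (x \<omega> - s \<omega>) \<partial>M) =
        1 - (2 / lam k) * (\<integral>\<omega>. norm (x \<omega> - s \<omega>) \<partial>M)"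
    proof -
      have e1: "(\<integral>\<omega>. h k \<omega> * norm (x \<omega>) - (2 / lam k) * norm (x \<omega> - s \<omega>) \<partial>M) =
          (\<integral>\<omega>. h k \<omega> * norm (x \<omega>) \<partial>M) - (\<integral>\<omega>. (2 / lam k) * norm (x \<omega> - s \<omega>) \<partial>M)"
        by (rule Bochner_Integration.integral_diff[OF hxint[OF k]]) (rule integrable_mult_right[OF s(2)])
      have e2: "(\<integral>\<omega>. (2 / lam k) * norm (x \<omega> - s \<omega>) \<partial>M) = (2 / lam k) * (\<integral>\<omega>. norm (x \<omega> - s \<omega>) \<partial>M)"
        by (rule integral_mult_right_zero)
      show ?thesis unfolding e1 e2 hx1[OF k] ..
    qed
    moreover have "(2 / lam k) * (\<integral>\<omega>. norm (x \<omega> - s \<omega>) \<partial>M) \<le> (2 / lam k) * eta"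
      using s(3) lam[OF k] by (intro mult_left_mono) auto
    ultimately show ?thesis by simp
  qed
  have Thy: "Th k y \<le> (\<integral>\<omega>. h k \<omega> * norm (y \<omega>) \<partial>M)" if k: "k < m" and y: "y \<in> L1 M" for k y
    unfolding Th_def
  proof (rule integral_mono)
    show "integrable M (\<lambda>\<omega>. h k \<omega> * F (s \<omega>) (y \<omega>))" by (rule Thint[OF k y])
    show "integrable M (\<lambda>\<omega>. h k \<omega> * norm (y \<omega>))" by (rule int_bmult[OF L1D(2)[OF cm y] hm[OF k] habs[OF k]])
    fix \<omega>
    show "h k \<omega> * F (s \<omega>) (y \<omega>) \<le> h k \<omega> * norm (y \<omega>)"
      using F(2)[of "s \<omega>" "y \<omega>"] h0[of k \<omega>] by (intro mult_left_mono) auto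
  qed

  define Mh where "Mh k \<phi> = (\<lambda>f::'a \<Rightarrow> 'b. \<phi> (\<lambda>\<omega>. h k \<omega> *\<^sub>R f \<omega>))" for k and \<phi> :: "('a \<Rightarrow> 'b) \<Rightarrow> real"
  define FV where "FV = Th ` {..<m} \<union> (\<Union>k<m. Mh k ` Fk k)"
  define r where "r = min eta (e / 2)"
  have r0: "r > 0" unfolding r_def using eta0 e0 by simp
  have FVfin: "finite FV" unfolding FV_def using Fkfin by auto
  have FVd: "FV \<subseteq> L1_dual M"
  proof -
    have "Mh k \<phi> \<in> L1_dual M" if "k < m" "\<phi> \<in> Fk k" for k \<phi>
      unfolding Mh_def using Fkd[OF that(1)] that(2)
      by (intro dual_mult[OF cm _ hm[OF that(1)] habs[OF that(1)]]) auto
    then show ?thesis unfolding FV_def using Thd by auto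
  qed
  define V where "V = {g \<in> L1_ball M. \<forall>\<phi>\<in>FV. \<bar>\<phi> g - \<phi> x\<bar> < r}"
  have Vopen: "rel_weakly_open M V" unfolding V_def by (rule rwo_basic[OF FVfin FVd r0])
  have xV: "x \<in> V" unfolding V_def L1_ball_def using xL1 x1 r0 by simp
  have VC: "V \<subseteq> {(\<lambda>\<omega>. \<Sum>k<m. lam k *\<^sub>R v k \<omega>) | v. \<forall>k<m. v k \<in> U k}"
  proof
    fix y assume yV: "y \<in> V"
    have yL1: "y \<in> L1 M" and Y1: "L1norm M y \<le> 1" using yV unfolding V_def L1_ball_def by auto
    have yclose: "\<bar>\<phi> y - \<phi> x\<bar> < r" if "\<phi> \<in> FV" for \<phi> using yV that unfolding V_def by blast
    define Y where "Y = L1norm M y"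
    have Yint: "Y = (\<integral>\<omega>. norm (y \<omega>) \<partial>M)" unfolding Y_def by (rule L1D(4)[OF cm yL1])
    define a where "a k = (\<integral>\<omega>. h k \<omega> * norm (y \<omega>) \<partial>M)" for k
    define t where "t = 3 * eta / lmin"
    have t0: "t \<ge> 0" unfolding t_def using eta0 lmin0 by simp
    have thalf: "t \<le> 1 / 2" unfolding t_def using lmin0 by (simp add: eta_def field_simps)
    have ak: "a k \<ge> 1 - t" if k: "k < m" for k
    proof -
      have "\<bar>Th k y - Th k x\<bar> < r" using yclose[of "Th k"] k unfolding FV_def by blast
      then have "Th k y > Th k x - eta" unfolding r_def by linarith
      moreover have "Th k x \<ge> 1 - 2 * eta / lam k" by (rule Thx[OF k])
      moreover have "2 * eta / lam k \<le> 2 * eta / lmin"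
        using lminl[OF k] lmin0 eta0 by (intro divide_left_mono) auto
      moreover have "eta \<le> eta / lmin" using lmin1 lmin0 eta0 by (simp add: le_divide_eq)
      moreover have "Th k y \<le> a k" unfolding a_def by (rule Thy[OF k yL1])
      moreover have "3 * eta / lmin = 2 * eta / lmin + eta / lmin" using lmin0 by (simp add: field_simps)
      ultimately show ?thesis unfolding t_def by linarith
    qed
    have apos: "a k > 0" if "k < m" for k using ak[OF that] thalf by linarith
    have hyint: "integrable M (\<lambda>\<omega>. h k \<omega> * norm (y \<omega>))" if k: "k < m" for k
      by (rule int_bmult[OF L1D(2)[OF cm yL1] hm[OF k] habs[OF k]])
    have sumA: "Y = (\<Sum>j<m. lam j * a j)"
      unfolding Yint a_def by (rule wsum[symmetric]) (use hyint hs in auto)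
    have aY: "\<bar>a k - Y\<bar> \<le> e / (4 * B)" if k: "k < m" for k
    proof -
      have "\<bar>a k - Y\<bar> \<le> t / lam k"
        by (rule arith_bound[OF lam s1 ak sumA _ t0 k]) (use Y1 Y_def in auto)
      also have "\<dots> \<le> t / lmin" using lminl[OF k] lmin0 t0 by (intro divide_left_mono) auto
      also have "\<dots> = 3 * eta / lmin^2" unfolding t_def by (simp add: power2_eq_square)
      also have "\<dots> \<le> 3 * (e * lmin^2 / (12 * B)) / lmin^2"
        using lmin0 by (intro divide_right_mono mult_left_mono) (auto simp: eta_def)
      also have "\<dots> = e / (4 * B)" using lmin0 B0 by (simp add: field_simps)
      finally show ?thesis .
    qed
    obtain g where gs: "\<And>\<omega>. (\<Sum>k<m. lam k * g k \<omega>) = 1"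
      and gk: "\<And>k. k < m \<Longrightarrow> g k \<in> borel_measurable M \<and>
     (\<forall>x\<in>space M. 0 \<le> g k x \<and> g k x \<le> 2 / lam k) \<and>
     (\<integral>x. g k x * norm (y x) \<partial>M) \<le> Y \<and> (\<integral>x. \<bar>g k x - h k x\<bar> * norm (y x) \<partial>M) \<le> \<bar>a k - Y\<bar>"
      using construct[OF lam s1 hm h0 hb hs L1D(2)[OF cm yL1] _ Yint _ a_def apos] Y1 Y_def by auto
    define v where "v k = (\<lambda>\<omega>. g k \<omega> *\<^sub>R y \<omega>)" for k
    have gabs: "\<bar>g k \<omega>\<bar> \<le> 2 / lam k" if "k < m" "\<omega> \<in> space M" for k \<omega> using gk[OF that(1)] that(2) by auto
    have vL1: "v k \<in> L1 M" if k: "k < m" for k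
      unfolding v_def by (rule L1_mult[OF cm yL1 _ gabs[OF k]]) (use gk[OF k] in auto)
    have vU: "v k \<in> U k" if k: "k < m" for k
    proof (rule subsetD[OF Fksub[OF k]], intro CollectI conjI ballI)
      have "L1norm M (v k) = (\<integral>\<omega>. \<bar>g k \<omega>\<bar> * norm (y \<omega>) \<partial>M)"
        unfolding v_def by (rule L1_mult_norm[OF cm yL1 _ gabs[OF k]]) (use gk[OF k] in auto)
      also have "\<dots> = (\<integral>\<omega>. g k \<omega> * norm (y \<omega>) \<partial>M)"
        using gk[OF k] by (intro Bochner_Integration.integral_cong) auto
      also have "\<dots> \<le> 1" using gk[OF k] Y1 Y_def by auto
      finally show "v k \<in> L1_ball M" unfolding L1_ball_def using vL1[OF k] by simp
    next
      fix \<phi> assume \<phi>F: "\<phi> \<in> Fk k"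
      have \<phi>d: "\<phi> \<in> L1_dual M" using Fkd[OF k] \<phi>F by blast
      define hy where "hy = (\<lambda>\<omega>. h k \<omega> *\<^sub>R y \<omega>)"
      define dy where "dy = (\<lambda>\<omega>. (g k \<omega> - h k \<omega>) *\<^sub>R y \<omega>)"
      have hyL1: "hy \<in> L1 M" unfolding hy_def by (rule L1_mult[OF cm yL1 hm[OF k] habs[OF k]])
      have dabs: "\<bar>g k \<omega> - h k \<omega>\<bar> \<le> 2 / lam k + 1 / lam k" if "\<omega> \<in> space M" for \<omega>
      proof -
        have "\<bar>g k \<omega> - h k \<omega>\<bar> \<le> \<bar>g k \<omega>\<bar> + \<bar>h k \<omega>\<bar>" by (rule abs_triangle_ineq4)
        also have "\<dots> \<le> 2 / lam k + 1 / lam k" by (rule add_mono[OF gabs[OF k that] habs[OF k]])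
        finally show ?thesis .
      qed
      have gkm: "g k \<in> borel_measurable M" using gk[OF k] by blast
      have dm: "(\<lambda>\<omega>. g k \<omega> - h k \<omega>) \<in> borel_measurable M"
        by (rule borel_measurable_diff[OF gkm hm[OF k]])
      have dyL1: "dy \<in> L1 M" unfolding dy_def by (rule L1_mult[OF cm yL1 dm dabs])
      have vsplit: "v k = (\<lambda>\<omega>. hy \<omega> + dy \<omega>)" unfolding v_def hy_def dy_def
        by (rule ext) (simp add: scaleR_left_diff_distrib)
      have "\<phi> (v k) = \<phi> hy + \<phi> dy" unfolding vsplit by (rule dual_add[OF cm \<phi>d hyL1 dyL1])
      moreover have "\<phi> (u k) = \<phi> (\<lambda>\<omega>. h k \<omega> *\<^sub>R x \<omega>)" by (rule ueq[OF k \<phi>d])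
      moreover have "\<bar>\<phi> hy - \<phi> (\<lambda>\<omega>. h k \<omega> *\<^sub>R x \<omega>)\<bar> < e / 2"
      proof -
        have "Mh k \<phi> \<in> FV" unfolding FV_def using k \<phi>F by blast
        then have "\<bar>Mh k \<phi> y - Mh k \<phi> x\<bar> < r" by (rule yclose)
        then show ?thesis unfolding Mh_def hy_def r_def by simp
      qed
      moreover have "\<bar>\<phi> dy\<bar> \<le> e / 4"
      proof -
        have "\<phi> \<in> FF" unfolding FF_def using k \<phi>F by blast
        then have "\<bar>\<phi> dy\<bar> \<le> B * L1norm M dy" using dyL1 by (rule Bb)
        also have "L1norm M dy = (\<integral>\<omega>. \<bar>g k \<omega> - h k \<omega>\<bar> * norm (y \<omega>) \<partial>M)"
          unfolding dy_def by (rule L1_mult_norm[OF cm yL1 dm dabs])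
        also have "\<dots> \<le> e / (4 * B)" using gk[OF k] aY[OF k] by linarith
        finally show ?thesis using B0 by (simp add: field_simps)
      qed
      ultimately have "\<bar>\<phi> (v k) - \<phi> (u k)\<bar> < e / 2 + e / 4" by linarith
      also have "\<dots> < ek k" using eek[OF k] e0 by linarith
      finally show "\<bar>\<phi> (v k) - \<phi> (u k)\<bar> < ek k" .
    qed
    have "y = (\<lambda>\<omega>. \<Sum>k<m. lam k *\<^sub>R v k \<omega>)"
    proof
      fix \<omega>
      have "(\<Sum>k<m. lam k *\<^sub>R v k \<omega>) = (\<Sum>k<m. lam k * g k \<omega>) *\<^sub>R y \<omega>"
        unfolding v_def by (simp add: scaleR_sum_left)
      then show "y \<omega> = (\<Sum>k<m. lam k *\<^sub>R v k \<omega>)" using gs[of \<omega>] by simp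
    qed
    then show "y \<in> {(\<lambda>\<omega>. \<Sum>k<m. lam k *\<^sub>R v k \<omega>) | v. \<forall>k<m. v k \<in> U k}" using vU by blast
  qed
  show ?thesis using Vopen xV VC by blast
qed


theorem theorem1p1:
  fixes M :: "'a measure"
  assumes "sigma_finite_measure M"
    and "complete_measure M"
    and "emeasure M (space M) \<noteq> 0"
    and "wUR TYPE('b::banach)"
  shows "L1_CWO_S M TYPE('b)"
  unfolding L1_CWO_S_def Let_def
proof (intro allI impI ballI)
  fix m :: nat and lam :: "nat \<Rightarrow> real" and U :: "nat \<Rightarrow> ('a \<Rightarrow> 'b) set" and x :: "'a \<Rightarrow> 'b"
  assume H: "m \<ge> 1 \<and> (\<forall>k<m. lam k > 0) \<and> (\<Sum>k<m. lam k) = 1 \<and> (\<forall>k<m. rel_weakly_open M (U k))"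
    and xC: "x \<in> {(\<lambda>x. \<Sum>k<m. lam k *\<^sub>R u k x) | u. \<forall>k<m. u k \<in> U k}"
    and x1: "L1norm M x = 1"
  from xC obtain u where xdef: "x = (\<lambda>x. \<Sum>k<m. lam k *\<^sub>R u k x)" and u: "\<forall>k<m. u k \<in> U k" by blast
  have "\<exists>V. rel_weakly_open M V \<and> x \<in> V \<and> V \<subseteq> {(\<lambda>\<omega>. \<Sum>k<m. lam k *\<^sub>R v k \<omega>) | v. \<forall>k<m. v k \<in> U k}"
    by (rule main_step[OF assms(2) assms(4)]) (use H u xdef x1 in auto)
  then show "\<exists>V. rel_weakly_open M V \<and> x \<in> V \<and> V \<subseteq> {(\<lambda>x. \<Sum>k<m. lam k *\<^sub>R u k x) | u. \<forall>k<m. u k \<in> U k}"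
    by simp
qed

end
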